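(* Let $A$ be a Lie conformal algebra and $M$ an $A$-module with a commutative associative product such that $\partial^M$ and all $a_\lambda$ act by derivations. (a) The bracket on $A\otimes M[[x]]$ given by $[a\otimes m(x),b\otimes n(x)]=[a_{\partial_{x_1}}b]\otimes m(x_1)n(x)|_{x_1=x}-a\otimes\langle n(x_1),b_{\lambda_1}m(x)\rangle+b\otimes\langle m(x_1),a_{\lambda_1}n(x)\rangle$ induces a well-defined Lie algebra bracket on $\mathfrak g=\Pi\tilde\Gamma_1=(A\otimes M[[x]])/(\partial\otimes1+1\otimes\partial_x)(A\otimes M[[x]])$ (regarded as an even space). (b) The operator $\partial\otimes1+1\otimes\partial^M$ on $A\otimes M[[x]]$ (with $\partial^M$ acting coefficientwise) is a derivation of this bracket; in particular the operator $\partial(a\otimes m(x))=a\otimes(\partial^M-\partial_x)m(x)$ is a derivation of the Lie algebra $\mathfrak g$, and its kernel $\mathfrak g^\partial=\Pi\Gamma_1$ is a Lie subalgebra.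
   Context: $\mathbb F$ field of characteristic 0, $A$ a Lie conformal algebra, $M$ an $A$-module. $M[[x]]$ is formal power series with coefficients in $M$; $\partial_x=d/dx$. Pairing: for $m(x)=\sum_n m_nx^n\in M[[x]]$ and $p(\lambda)=\sum_np_n\lambda^n\in\mathbb F[\lambda]\otimes M$ (possibly with further coefficients in $M[[x']]$), $\langle m(x_1),p(\lambda_1)\rangle=\sum_n n!\,m_np_n$ (product in $M$), i.e. $x_1$ is contracted against $\lambda_1$ with $\langle x^m,\lambda^n\rangle=n!\delta_{mn}$. In $b_{\lambda_1}m(x)$ the $\lambda$-action is applied coefficientwise in $x$. In $[a_{\partial_{x_1}}b]\otimes m(x_1)n(x)|_{x_1=x}$: writing $[a_\lambda b]=\sum_j\lambda^jc_j$, this means $\sum_jc_j\otimes(\partial_x^jm)(x)\,n(x)$. $\Gamma_1$ denotes the kernel of $\partial$ on $\tilde\Gamma_1$ (here $\tilde\Gamma_1$ is the space of basic 1-chains, identified with $(A\otimes M[[x]])/(\partial\otimes1+1\otimes\partial_x)(A\otimes M[[x]])$ via $\phi\mapsto\sum_n\phi(\lambda^n)x^n/n!$). *)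

theory Defs
  imports "HOL-Computational_Algebra.Polynomial" "HOL-Library.Function_Algebras"
begin

text \<open>
  Scalars: a field 'k of characteristic 0.  Vector spaces are types with an explicit
  scalar multiplication (locale vector_space of HOL.Vector_Spaces).
  A lambda-bracket [a_lambda b] = sum_j lambda^j c_j is represented as a polynomial
  in lambda with coefficients in A (type 'a poly), coeff (lb a b) j = c_j.
  Likewise the action a_lambda m is a polynomial act a m with coefficients in M.
  Formal power series M[[x]] are functions nat => 'm (coefficient of x^n).
\<close>

definition lca_bilinear ::
  "('k::field \<Rightarrow> 'a::ab_group_add \<Rightarrow> 'a) \<Rightarrow> ('k \<Rightarrow> 'b::ab_group_add \<Rightarrow> 'b)
   \<Rightarrow> ('k \<Rightarrow> 'c::ab_group_add \<Rightarrow> 'c) \<Rightarrow> ('a \<Rightarrow> 'b \<Rightarrow> 'c poly) \<Rightarrow> bool" where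
  "lca_bilinear sA sB sC br \<longleftrightarrow>
     (\<forall>j b. Vector_Spaces.linear sA sC (\<lambda>a. coeff (br a b) j)) \<and>
     (\<forall>j a. Vector_Spaces.linear sB sC (\<lambda>b. coeff (br a b) j))"

text \<open>Sesquilinearity: [(da)_lambda b] = -lambda [a_lambda b],
  [a_lambda (db)] = (d + lambda)[a_lambda b].\<close>
definition sesquilinear ::
  "('a::ab_group_add \<Rightarrow> 'a) \<Rightarrow> ('b::ab_group_add \<Rightarrow> 'b) \<Rightarrow> ('a \<Rightarrow> 'b \<Rightarrow> 'b poly) \<Rightarrow> bool" where
  "sesquilinear dA dB br \<longleftrightarrow>
     (\<forall>a b j. coeff (br (dA a) b) j = (if j = 0 then 0 else - coeff (br a b) (j - 1))) \<and>
     (\<forall>a b j. coeff (br a (dB b)) j =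
                dB (coeff (br a b) j) + (if j = 0 then 0 else coeff (br a b) (j - 1)))"

text \<open>Skew-symmetry: [b_lambda a] = - [a_{-lambda-d} b].  Writing [a_mu b] = sum_j mu^j c_j,
  the coefficient of lambda^k in [a_{-lambda-d} b] is
  sum_{j >= k} (-1)^j (j choose k) d^(j-k) c_j.\<close>
definition skew_symmetric ::
  "('k::field \<Rightarrow> 'a::ab_group_add \<Rightarrow> 'a) \<Rightarrow> ('a \<Rightarrow> 'a) \<Rightarrow> ('a \<Rightarrow> 'a \<Rightarrow> 'a poly) \<Rightarrow> bool" where
  "skew_symmetric sA dA lb \<longleftrightarrow>
     (\<forall>a b k. coeff (lb b a) k =
        - (\<Sum>j\<in>{k..degree (lb a b)}.
             sA ((-1) ^ j * of_nat (j choose k)) ((dA ^^ (j - k)) (coeff (lb a b) j))))"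

text \<open>Jacobi identity (also the module axiom):
  [a_lambda [b_mu m]] - [b_mu [a_lambda m]] = [[a_lambda b]_{lambda+mu} m],
  compared coefficientwise at lambda^i mu^j.  The coefficient of lambda^i mu^j in
  sum_{k,l} lambda^k (lambda+mu)^l e_{kl} is sum_{k<=i} (i+j-k choose j) e_{k,i+j-k}.\<close>
definition jacobi_rule ::
  "('k::field \<Rightarrow> 'm::ab_group_add \<Rightarrow> 'm) \<Rightarrow> ('a::ab_group_add \<Rightarrow> 'a \<Rightarrow> 'a poly)
   \<Rightarrow> ('a \<Rightarrow> 'm \<Rightarrow> 'm poly) \<Rightarrow> bool" where
  "jacobi_rule sM lb act \<longleftrightarrow>
     (\<forall>a b m i j.
        coeff (act a (coeff (act b m) j)) i - coeff (act b (coeff (act a m) i)) j =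
        (\<Sum>k\<le>i. sM (of_nat ((i + j - k) choose j))
                    (coeff (act (coeff (lb a b) k) m) (i + j - k))))"

definition lie_conformal_algebra ::
  "('k::field \<Rightarrow> 'a::ab_group_add \<Rightarrow> 'a) \<Rightarrow> ('a \<Rightarrow> 'a) \<Rightarrow> ('a \<Rightarrow> 'a \<Rightarrow> 'a poly) \<Rightarrow> bool" where
  "lie_conformal_algebra sA dA lb \<longleftrightarrow>
     vector_space sA \<and> Vector_Spaces.linear sA sA dA \<and> lca_bilinear sA sA sA lb \<and>
     sesquilinear dA dA lb \<and> skew_symmetric sA dA lb \<and> jacobi_rule sA lb lb"

definition lca_module ::
  "('k::field \<Rightarrow> 'a::ab_group_add \<Rightarrow> 'a) \<Rightarrow> ('a \<Rightarrow> 'a) \<Rightarrow> ('a \<Rightarrow> 'a \<Rightarrow> 'a poly)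
   \<Rightarrow> ('k \<Rightarrow> 'm::ab_group_add \<Rightarrow> 'm) \<Rightarrow> ('m \<Rightarrow> 'm) \<Rightarrow> ('a \<Rightarrow> 'm \<Rightarrow> 'm poly) \<Rightarrow> bool" where
  "lca_module sA dA lb sM dM act \<longleftrightarrow>
     vector_space sM \<and> Vector_Spaces.linear sM sM dM \<and> lca_bilinear sA sM sM act \<and>
     sesquilinear dA dM act \<and> jacobi_rule sM lb act"

definition derivation_algebra ::
  "('k::field \<Rightarrow> 'm::ab_group_add \<Rightarrow> 'm) \<Rightarrow> ('m \<Rightarrow> 'm) \<Rightarrow> ('a \<Rightarrow> 'm \<Rightarrow> 'm poly)
   \<Rightarrow> ('m \<Rightarrow> 'm \<Rightarrow> 'm) \<Rightarrow> bool" where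
  "derivation_algebra sM dM act mu \<longleftrightarrow>
     (\<forall>n. Vector_Spaces.linear sM sM (\<lambda>m. mu m n)) \<and>
     (\<forall>m. Vector_Spaces.linear sM sM (\<lambda>n. mu m n)) \<and>
     (\<forall>m n. mu m n = mu n m) \<and>
     (\<forall>m n p. mu (mu m n) p = mu m (mu n p)) \<and>
     (\<forall>m n. dM (mu m n) = mu (dM m) n + mu m (dM n)) \<and>
     (\<forall>a m n j. coeff (act a (mu m n)) j =
                  mu (coeff (act a m) j) n + mu m (coeff (act a n) j))"

definition ser_scale :: "('k \<Rightarrow> 'm \<Rightarrow> 'm) \<Rightarrow> 'k \<Rightarrow> (nat \<Rightarrow> 'm) \<Rightarrow> (nat \<Rightarrow> 'm)" where
  "ser_scale sM c f = (\<lambda>n. sM c (f n))"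

definition ser_dx :: "('k::field \<Rightarrow> 'm \<Rightarrow> 'm) \<Rightarrow> (nat \<Rightarrow> 'm) \<Rightarrow> (nat \<Rightarrow> 'm)" where
  "ser_dx sM f = (\<lambda>n. sM (of_nat (Suc n)) (f (Suc n)))"

definition ser_map :: "('m \<Rightarrow> 'm) \<Rightarrow> (nat \<Rightarrow> 'm) \<Rightarrow> (nat \<Rightarrow> 'm)" where
  "ser_map d f = (\<lambda>n. d (f n))"

definition ser_mult :: "('m::comm_monoid_add \<Rightarrow> 'm \<Rightarrow> 'm) \<Rightarrow> (nat \<Rightarrow> 'm) \<Rightarrow> (nat \<Rightarrow> 'm) \<Rightarrow> (nat \<Rightarrow> 'm)" where
  "ser_mult mu f g = (\<lambda>k. \<Sum>i\<le>k. mu (f i) (g (k - i)))"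

text \<open>The pairing  < n(x_1), b_{lambda_1} m(x) >  with <x^p, lambda^q> = q! delta_{pq};
  b_lambda m(x) is taken coefficientwise in x, so the coefficient of x^k of the result is
  sum_p p! n_p (b_(p) m_k).\<close>
definition pair_act ::
  "('k::field \<Rightarrow> 'm::ab_group_add \<Rightarrow> 'm) \<Rightarrow> ('a \<Rightarrow> 'm \<Rightarrow> 'm poly) \<Rightarrow> ('m \<Rightarrow> 'm \<Rightarrow> 'm)
   \<Rightarrow> (nat \<Rightarrow> 'm) \<Rightarrow> 'a \<Rightarrow> (nat \<Rightarrow> 'm) \<Rightarrow> (nat \<Rightarrow> 'm)" where
  "pair_act sM act mu n b m =
     (\<lambda>k. \<Sum>p\<le>degree (act b (m k)). sM (of_nat (fact p)) (mu (n p) (coeff (act b (m k)) p)))"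

text \<open>tens : A x B -> T is (the structure map of) a tensor product A (x) B over the field:
  it is bilinear, its image spans T, and whenever sum_{a in S} a (x) g(a) = 0 for a
  finite linearly independent S, all g(a) = 0.  This characterises the algebraic tensor
  product up to unique isomorphism.\<close>
definition tensor_product ::
  "('k::field \<Rightarrow> 'a::ab_group_add \<Rightarrow> 'a) \<Rightarrow> ('k \<Rightarrow> 'b::ab_group_add \<Rightarrow> 'b)
   \<Rightarrow> ('k \<Rightarrow> 't::ab_group_add \<Rightarrow> 't) \<Rightarrow> ('a \<Rightarrow> 'b \<Rightarrow> 't) \<Rightarrow> bool" where
  "tensor_product sA sB sT tens \<longleftrightarrow>
     (\<forall>b. Vector_Spaces.linear sA sT (\<lambda>a. tens a b)) \<and>
     (\<forall>a. Vector_Spaces.linear sB sT (\<lambda>b. tens a b)) \<and>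
     module.span sT (range (\<lambda>(a, b). tens a b)) = UNIV \<and>
     (\<forall>S g. finite S \<longrightarrow> \<not> module.dependent sA S \<longrightarrow>
        (\<Sum>a\<in>S. tens a (g a)) = 0 \<longrightarrow> (\<forall>a\<in>S. g a = 0))"

definition bilinear_map ::
  "('k::field \<Rightarrow> 't::ab_group_add \<Rightarrow> 't) \<Rightarrow> ('t \<Rightarrow> 't \<Rightarrow> 't) \<Rightarrow> bool" where
  "bilinear_map sT br \<longleftrightarrow>
     (\<forall>v. Vector_Spaces.linear sT sT (\<lambda>u. br u v)) \<and> (\<forall>u. Vector_Spaces.linear sT sT (\<lambda>v. br u v))"

definition chain_bracket_pure ::
  "('k::field \<Rightarrow> 'm::ab_group_add \<Rightarrow> 'm) \<Rightarrow> ('a::ab_group_add \<Rightarrow> 'a \<Rightarrow> 'a poly)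
   \<Rightarrow> ('a \<Rightarrow> 'm \<Rightarrow> 'm poly) \<Rightarrow> ('m \<Rightarrow> 'm \<Rightarrow> 'm) \<Rightarrow> ('a \<Rightarrow> (nat \<Rightarrow> 'm) \<Rightarrow> 't::ab_group_add)
   \<Rightarrow> 'a \<Rightarrow> (nat \<Rightarrow> 'm) \<Rightarrow> 'a \<Rightarrow> (nat \<Rightarrow> 'm) \<Rightarrow> 't" where
  "chain_bracket_pure sM lb act mu tens a m b n =
     (\<Sum>j\<le>degree (lb a b). tens (coeff (lb a b) j) (ser_mult mu ((ser_dx sM ^^ j) m) n))
     - tens a (pair_act sM act mu n b m)
     + tens b (pair_act sM act mu m a n)"

end

theory Submission
  imports Defs
begin



locale setting =
  fixes sA :: "'k::field_char_0 \<Rightarrow> 'a::ab_group_add \<Rightarrow> 'a"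
    and dA :: "'a \<Rightarrow> 'a"
    and lb :: "'a \<Rightarrow> 'a \<Rightarrow> 'a poly"
    and sM :: "'k \<Rightarrow> 'm::ab_group_add \<Rightarrow> 'm"
    and dM :: "'m \<Rightarrow> 'm"
    and act :: "'a \<Rightarrow> 'm \<Rightarrow> 'm poly"
    and mu :: "'m \<Rightarrow> 'm \<Rightarrow> 'm"
    and sT :: "'k \<Rightarrow> 't::ab_group_add \<Rightarrow> 't"
    and tens :: "'a \<Rightarrow> (nat \<Rightarrow> 'm) \<Rightarrow> 't"
  assumes LCA: "lie_conformal_algebra sA dA lb"
    and MOD: "lca_module sA dA lb sM dM act"
    and PROD: "derivation_algebra sM dM act mu"
    and TENS: "tensor_product sA (ser_scale sM) sT tens"
begin

lemma vsA: "vector_space sA" using LCA by (simp add: lie_conformal_algebra_def)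
lemma vsM: "vector_space sM" using MOD by (simp add: lca_module_def)
lemma dA_lin: "Vector_Spaces.linear sA sA dA" using LCA by (simp add: lie_conformal_algebra_def)
lemma dM_lin: "Vector_Spaces.linear sM sM dM" using MOD by (simp add: lca_module_def)
lemma lb_lin1: "Vector_Spaces.linear sA sA (\<lambda>a. coeff (lb a b) j)"
  using LCA by (simp add: lie_conformal_algebra_def lca_bilinear_def)
lemma lb_lin2: "Vector_Spaces.linear sA sA (\<lambda>b. coeff (lb a b) j)"
  using LCA by (simp add: lie_conformal_algebra_def lca_bilinear_def)
lemma act_lin1: "Vector_Spaces.linear sA sM (\<lambda>a. coeff (act a m) j)"
  using MOD by (simp add: lca_module_def lca_bilinear_def)
lemma act_lin2: "Vector_Spaces.linear sM sM (\<lambda>m. coeff (act a m) j)"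
  using MOD by (simp add: lca_module_def lca_bilinear_def)
lemma tens_lin1: "Vector_Spaces.linear sA sT (\<lambda>a. tens a m)"
  using TENS by (simp add: tensor_product_def)
lemma tens_lin2: "Vector_Spaces.linear (ser_scale sM) sT (\<lambda>m. tens a m)"
  using TENS by (simp add: tensor_product_def)
lemma tens_span: "module.span sT (range (\<lambda>(a, b). tens a b)) = UNIV"
  using TENS by (simp add: tensor_product_def)
lemma tens_indep: "finite S \<Longrightarrow> \<not> module.dependent sA S \<Longrightarrow>
        (\<Sum>a\<in>S. tens a (g a)) = 0 \<Longrightarrow> a\<in>S \<Longrightarrow> g a = 0"
  using TENS unfolding tensor_product_def by blast
lemma vsT: "vector_space sT" using tens_lin1 by (simp add: Vector_Spaces.linear_def)
lemma vsS: "vector_space (ser_scale sM)" using tens_lin2 by (simp add: Vector_Spaces.linear_def)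
lemma mu_lin1: "Vector_Spaces.linear sM sM (\<lambda>m. mu m n)"
  using PROD unfolding derivation_algebra_def by blast
lemma mu_lin2: "Vector_Spaces.linear sM sM (\<lambda>n. mu m n)"
  using PROD unfolding derivation_algebra_def by blast
lemma mu_comm: "mu m n = mu n m" using PROD unfolding derivation_algebra_def by blast
lemma mu_assoc: "mu (mu m n) p = mu m (mu n p)" using PROD unfolding derivation_algebra_def by blast
lemma dM_mu: "dM (mu m n) = mu (dM m) n + mu m (dM n)" using PROD unfolding derivation_algebra_def by blast
lemma act_mu: "coeff (act a (mu m n)) j = mu (coeff (act a m) j) n + mu m (coeff (act a n) j)"
  using PROD unfolding derivation_algebra_def by blast
lemma sesq_lb1: "coeff (lb (dA a) b) j = (if j = 0 then 0 else - coeff (lb a b) (j - 1))"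
  using LCA by (simp add: lie_conformal_algebra_def sesquilinear_def)
lemma sesq_lb2: "coeff (lb a (dA b)) j = dA (coeff (lb a b) j) + (if j = 0 then 0 else coeff (lb a b) (j - 1))"
  using LCA by (simp add: lie_conformal_algebra_def sesquilinear_def)
lemma sesq_act1: "coeff (act (dA a) m) j = (if j = 0 then 0 else - coeff (act a m) (j - 1))"
  using MOD by (simp add: lca_module_def sesquilinear_def)
lemma sesq_act2: "coeff (act a (dM m)) j = dM (coeff (act a m) j) + (if j = 0 then 0 else coeff (act a m) (j - 1))"
  using MOD by (simp add: lca_module_def sesquilinear_def)
lemma skew: "coeff (lb b a) k =
        - (\<Sum>j\<in>{k..degree (lb a b)}. sA ((-1) ^ j * of_nat (j choose k)) ((dA ^^ (j - k)) (coeff (lb a b) j)))"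
  using LCA unfolding lie_conformal_algebra_def skew_symmetric_def by blast
lemma jac_lb: "coeff (lb a (coeff (lb b m) j)) i - coeff (lb b (coeff (lb a m) i)) j =
        (\<Sum>k\<le>i. sA (of_nat ((i + j - k) choose j)) (coeff (lb (coeff (lb a b) k) m) (i + j - k)))"
  using LCA unfolding lie_conformal_algebra_def jacobi_rule_def by blast
lemma jac_act: "coeff (act a (coeff (act b m) j)) i - coeff (act b (coeff (act a m) i)) j =
        (\<Sum>k\<le>i. sM (of_nat ((i + j - k) choose j)) (coeff (act (coeff (lb a b) k) m) (i + j - k)))"
  using MOD unfolding lca_module_def jacobi_rule_def by blast


end



lemma lin_add: "Vector_Spaces.linear s1 s2 f \<Longrightarrow> f (x + y) = f x + f y"
  by (simp add: Vector_Spaces.linear_iff)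
lemma lin_scale: "Vector_Spaces.linear s1 s2 f \<Longrightarrow> f (s1 c x) = s2 c (f x)"
  by (simp add: Vector_Spaces.linear_iff)
lemma lin_zero: "Vector_Spaces.linear s1 s2 f \<Longrightarrow> f 0 = 0"
  by (metis add_cancel_right_right lin_add)
lemma lin_neg: "Vector_Spaces.linear s1 s2 f \<Longrightarrow> f (- x) = - f x"
  by (metis add.right_inverse add_eq_0_iff lin_add lin_zero)
lemma lin_diff: "Vector_Spaces.linear s1 s2 f \<Longrightarrow> f (x - y) = f x - f y"
  by (metis diff_conv_add_uminus lin_add lin_neg)
lemma lin_sum: "Vector_Spaces.linear s1 s2 f \<Longrightarrow> f (sum g S) = (\<Sum>x\<in>S. f (g x))"
  by (induct S rule: infinite_finite_induct) (auto simp: lin_zero lin_add)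
lemma lin_vs1: "Vector_Spaces.linear s1 s2 f \<Longrightarrow> vector_space s1"
  by (simp add: Vector_Spaces.linear_iff)
lemma lin_vs2: "Vector_Spaces.linear s1 s2 f \<Longrightarrow> vector_space s2"
  by (simp add: Vector_Spaces.linear_iff)
lemma linI: "vector_space s1 \<Longrightarrow> vector_space s2 \<Longrightarrow> (\<And>x y. f (x + y) = f x + f y) \<Longrightarrow>
   (\<And>c x. f (s1 c x) = s2 c (f x)) \<Longrightarrow> Vector_Spaces.linear s1 s2 f"
  by (simp add: Vector_Spaces.linear_iff)

lemma vs_mod: "vector_space s \<Longrightarrow> module s" by (simp add: module_iff_vector_space)
lemma vs_add_r: "vector_space s \<Longrightarrow> s a (x + y) = s a x + s a y"
  by (rule module.scale_right_distrib[OF vs_mod])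
lemma vs_add_l: "vector_space s \<Longrightarrow> s (a + b) x = s a x + s b x"
  by (rule module.scale_left_distrib[OF vs_mod])
lemma vs_mult: "vector_space s \<Longrightarrow> s a (s b x) = s (a * b) x"
  by (rule module.scale_scale[OF vs_mod])
lemma vs_comm: "vector_space s \<Longrightarrow> s a (s b x) = s b (s a x)"
  by (rule module.scale_left_commute[OF vs_mod])
lemma vs_one: "vector_space s \<Longrightarrow> s 1 x = x"
  by (rule module.scale_one[OF vs_mod])
lemma vs_zero_r: "vector_space s \<Longrightarrow> s a 0 = 0"
  by (rule module.scale_zero_right[OF vs_mod])
lemma vs_zero_l: "vector_space s \<Longrightarrow> s 0 x = 0"
  by (rule module.scale_zero_left[OF vs_mod])
lemma vs_neg_r: "vector_space s \<Longrightarrow> s a (- x) = - s a x"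
  by (rule module.scale_minus_right[OF vs_mod])
lemma vs_neg_l: "vector_space s \<Longrightarrow> s (- a) x = - s a x"
  by (rule module.scale_minus_left[OF vs_mod])
lemma vs_diff_r: "vector_space s \<Longrightarrow> s a (x - y) = s a x - s a y"
  by (rule module.scale_right_diff_distrib[OF vs_mod])
lemma vs_diff_l: "vector_space s \<Longrightarrow> s (a - b) x = s a x - s b x"
  by (rule module.scale_left_diff_distrib[OF vs_mod])
lemma vs_sum_r: "vector_space s \<Longrightarrow> s a (sum f A) = (\<Sum>x\<in>A. s a (f x))"
  by (rule module.scale_sum_right[OF vs_mod])
lemma vs_sum_l: "vector_space s \<Longrightarrow> s (sum f A) x = (\<Sum>a\<in>A. s (f a) x)"
  by (rule module.scale_sum_left[OF vs_mod])

context setting begin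

lemma tens_add1: "tens (a + b) m = tens a m + tens b m" using lin_add[OF tens_lin1] .
lemma tens_add2: "tens a (m + n) = tens a m + tens a n" using lin_add[OF tens_lin2] .
lemma tens_zero1[simp]: "tens 0 m = 0" using lin_zero[OF tens_lin1] .
lemma tens_zero2[simp]: "tens a 0 = 0" using lin_zero[OF tens_lin2] .
lemma tens_diff1: "tens (a - b) m = tens a m - tens b m" using lin_diff[OF tens_lin1] .
lemma tens_diff2: "tens a (m - n) = tens a m - tens a n" using lin_diff[OF tens_lin2] .
lemma tens_neg1: "tens (- a) m = - tens a m" using lin_neg[OF tens_lin1] .
lemma tens_neg2: "tens a (- m) = - tens a m" using lin_neg[OF tens_lin2] .
lemma tens_sum1: "tens (sum g S) m = (\<Sum>x\<in>S. tens (g x) m)" using lin_sum[OF tens_lin1] .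
lemma tens_sum2: "tens a (sum g S) = (\<Sum>x\<in>S. tens a (g x))" using lin_sum[OF tens_lin2] .
lemma tens_scale1: "tens (sA c a) m = sT c (tens a m)" using lin_scale[OF tens_lin1] .
lemma tens_scale2: "tens a (ser_scale sM c m) = sT c (tens a m)" using lin_scale[OF tens_lin2] .

lemma span_pure: "t \<in> module.span sT (range (\<lambda>(a, b). tens a b))"
  using tens_span by simp

lemma T_induct:
  assumes "\<And>a m. Q (tens a m)" "Q 0" "\<And>x y. Q x \<Longrightarrow> Q y \<Longrightarrow> Q (x + y)"
    "\<And>c x. Q x \<Longrightarrow> Q (sT c x)"
  shows "Q t"
proof -
  interpret T: vector_space sT by (rule vsT)
  have "t \<in> T.span (range (\<lambda>(a, b). tens a b))" using span_pure .
  then show ?thesis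
  proof (induct rule: T.span_induct_alt)
    case base then show ?case using assms(2) .
  next
    case (step c x y)
    then obtain a m where "x = tens a m" by auto
    then show ?case using step assms by auto
  qed
qed

lemma ext_pure:
  assumes "Vector_Spaces.linear sT sC F" "Vector_Spaces.linear sT sC G"
    "\<And>a m. F (tens a m) = G (tens a m)"
  shows "F t = G t"
  by (rule T_induct[where Q="\<lambda>t. F t = G t"])
     (auto simp: assms lin_zero[OF assms(1)] lin_zero[OF assms(2)] lin_add[OF assms(1)] lin_add[OF assms(2)]
        lin_scale[OF assms(1)] lin_scale[OF assms(2)])

end



context setting begin

lemma tens_inj_basis:
  assumes BA: "\<not> module.dependent sA BA" and BS: "\<not> module.dependent (ser_scale sM) BS"
    and b: "b \<in> BA" "b' \<in> BA" and e: "e \<in> BS" "e' \<in> BS" and eq: "tens b e = tens b' e'"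
  shows "b = b' \<and> e = e'"
proof -
  interpret A: vector_space sA by (rule vsA)
  interpret S: vector_space "ser_scale sM" by (rule vsS)
  have e0: "e \<noteq> 0" using BS e(1) S.dependent_zero by blast
  have b0: "b \<noteq> 0" using BA b(1) A.dependent_zero by blast
  show ?thesis
  proof (cases "b = b'")
    case True
    have "(\<Sum>a\<in>{b}. tens a ((\<lambda>_. e - e') a)) = 0" using eq True by (simp add: tens_diff2)
    then have "e - e' = 0"
      using tens_indep[of "{b}" "\<lambda>_. e - e'" b] A.independent_mono[OF BA] b b0 by auto
    then show ?thesis using True by simp
  next
    case False
    let ?g = "\<lambda>a. if a = b then e else - e'"
    have "(\<Sum>a\<in>{b, b'}. tens a (?g a)) = 0" using eq False by (simp add: tens_neg2)
    then have "?g b = 0"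
      using tens_indep[of "{b,b'}" ?g b] A.independent_mono[OF BA] b by auto
    then show ?thesis using e0 by simp
  qed
qed

lemma tens_basis_indep:
  assumes BA: "\<not> module.dependent sA BA" and BS: "\<not> module.dependent (ser_scale sM) BS"
  shows "\<not> module.dependent sT ((\<lambda>(b, e). tens b e) ` (BA \<times> BS))"
proof -
  interpret A: vector_space sA by (rule vsA)
  interpret S: vector_space "ser_scale sM" by (rule vsS)
  interpret T: vector_space sT by (rule vsT)
  let ?p = "\<lambda>(b, e). tens b e"
  have inj: "inj_on ?p (BA \<times> BS)"
    using tens_inj_basis[OF BA BS] by (auto simp: inj_on_def)
  show ?thesis
    unfolding T.independent_explicit_module
  proof (intro allI impI)
    fix t u v
    assume t: "finite t" "t \<subseteq> ?p ` (BA \<times> BS)" and s: "(\<Sum>v\<in>t. sT (u v) v) = 0" and v: "v \<in> t"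
    define Q where "Q = (BA \<times> BS) \<inter> ?p -` t"
    have tQ: "t = ?p ` Q" using t(2) unfolding Q_def by blast
    have injQ: "inj_on ?p Q" using inj by (rule inj_on_subset) (auto simp: Q_def)
    have fQ: "finite Q" using t(1) tQ injQ finite_image_iff by metis
    define G where "G b = (\<Sum>e\<in>{e. (b, e) \<in> Q}. ser_scale sM (u (tens b e)) e)" for b
    have fin2: "finite {e. (b, e) \<in> Q}" for b
    proof -
      have "{e. (b, e) \<in> Q} \<subseteq> snd ` Q" by force
      then show ?thesis using fQ finite_subset by blast
    qed
    have "(\<Sum>v\<in>t. sT (u v) v) = (\<Sum>q\<in>Q. sT (u (?p q)) (?p q))"
      unfolding tQ by (rule sum.reindex[OF injQ, unfolded comp_def])
    also have "\<dots> = (\<Sum>q\<in>Q. tens (fst q) (ser_scale sM (u (?p q)) (snd q)))"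
      by (auto simp: tens_scale2 intro!: sum.cong)
    also have "\<dots> = (\<Sum>b\<in>fst ` Q. tens b (G b))"
    proof -
      have "(\<Sum>q\<in>Q. tens (fst q) (ser_scale sM (u (?p q)) (snd q))) =
        (\<Sum>b\<in>fst ` Q. \<Sum>q\<in>{q\<in>Q. fst q = b}. tens (fst q) (ser_scale sM (u (?p q)) (snd q)))"
        by (rule sum.image_gen[OF fQ])
      also have "\<dots> = (\<Sum>b\<in>fst ` Q. tens b (G b))"
      proof (rule sum.cong[OF refl])
        fix b assume "b \<in> fst ` Q"
        have "(\<Sum>q\<in>{q\<in>Q. fst q = b}. tens (fst q) (ser_scale sM (u (?p q)) (snd q))) =
              (\<Sum>e\<in>{e. (b, e) \<in> Q}. tens b (ser_scale sM (u (tens b e)) e))"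
          by (rule sum.reindex_bij_witness[where i="\<lambda>e. (b, e)" and j=snd]) auto
        also have "\<dots> = tens b (G b)" by (simp add: G_def tens_sum2)
        finally show "(\<Sum>q\<in>{q\<in>Q. fst q = b}. tens (fst q) (ser_scale sM (u (?p q)) (snd q))) = tens b (G b)" .
      qed
      finally show ?thesis .
    qed
    finally have "(\<Sum>b\<in>fst ` Q. tens b (G b)) = 0" using s by simp
    then have G0: "G b = 0" if "b \<in> fst ` Q" for b
    proof -
      have "fst ` Q \<subseteq> BA" by (auto simp: Q_def)
      then have "A.independent (fst ` Q)" using A.independent_mono[OF BA] by blast
      then show ?thesis using tens_indep[of "fst ` Q" G b] fQ that \<open>(\<Sum>b\<in>fst ` Q. tens b (G b)) = 0\<close> by blast
    qed
    from v tQ obtain b e where be: "(b, e) \<in> Q" "v = tens b e" by auto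
    have "(\<Sum>e\<in>{e. (b, e) \<in> Q}. ser_scale sM (u (tens b e)) e) = 0"
      using G0[of b] be by (force simp: G_def)
    then show "u v = 0"
      using S.independentD[OF BS fin2[of b], of "\<lambda>e. u (tens b e)" e] be by (auto simp: Q_def)
  qed
qed

lemma lift:
  fixes sC :: "'k \<Rightarrow> 'c::ab_group_add \<Rightarrow> 'c"
  assumes vsC: "vector_space sC"
    and l1: "\<And>m. Vector_Spaces.linear sA sC (\<lambda>a. phi a m)"
    and l2: "\<And>a. Vector_Spaces.linear (ser_scale sM) sC (\<lambda>m. phi a m)"
  shows "\<exists>F. Vector_Spaces.linear sT sC F \<and> (\<forall>a m. F (tens a m) = phi a m)"
proof -
  interpret A: vector_space sA by (rule vsA)
  interpret S: vector_space "ser_scale sM" by (rule vsS)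
  interpret T: vector_space sT by (rule vsT)
  interpret TC: vector_space_pair sT sC using vsT vsC by (simp add: vector_space_pair_def)
  interpret AC: vector_space_pair sA sC using vsA vsC by (simp add: vector_space_pair_def)
  interpret SC: vector_space_pair "ser_scale sM" sC using vsS vsC by (simp add: vector_space_pair_def)
  obtain BA where BA: "\<not> A.dependent BA" "UNIV \<subseteq> A.span BA"
    using A.maximal_independent_subset[of UNIV] by blast
  obtain BS where BS: "\<not> S.dependent BS" "UNIV \<subseteq> S.span BS"
    using S.maximal_independent_subset[of UNIV] by blast
  let ?p = "\<lambda>(b, e). tens b e"
  let ?E = "?p ` (BA \<times> BS)"
  have indE: "\<not> T.dependent ?E" using tens_basis_indep BA BS by blast
  define g where "g t = (case inv_into (BA \<times> BS) ?p t of (b, e) \<Rightarrow> phi b e)" for t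
  have inj: "inj_on ?p (BA \<times> BS)"
    using tens_inj_basis[OF BA(1) BS(1)] by (auto simp: inj_on_def)
  define F where "F = TC.construct ?E g"
  have linF: "Vector_Spaces.linear sT sC F" unfolding F_def by (rule TC.linear_construct[OF indE])
  have onb: "F (tens b e) = phi b e" if "b \<in> BA" "e \<in> BS" for b e
  proof -
    have "F (tens b e) = g (tens b e)" unfolding F_def
      by (rule TC.construct_basis[OF indE]) (use that in auto)
    also have "\<dots> = phi b e" unfolding g_def
      using inv_into_f_f[OF inj, of "(b, e)"] that by simp
    finally show ?thesis .
  qed
  have l1F: "Vector_Spaces.linear sA sC (\<lambda>a. F (tens a m))" for m
    using Vector_Spaces.linear_compose[OF tens_lin1 linF] by (simp add: comp_def)
  have l2F: "Vector_Spaces.linear (ser_scale sM) sC (\<lambda>m. F (tens a m))" for a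
    using Vector_Spaces.linear_compose[OF tens_lin2 linF] by (simp add: comp_def)
  have step1: "F (tens a e) = phi a e" if "e \<in> BS" for a e
    by (rule AC.linear_eq_on[OF l1F l1, where B=BA]) (use BA onb that in auto)
  have "F (tens a m) = phi a m" for a m
    by (rule SC.linear_eq_on[OF l2F l2, where B=BS]) (use BS step1 in auto)
  with linF show ?thesis by blast
qed

end



context setting begin

lemma ext_pure2:
  assumes "\<And>v. Vector_Spaces.linear sT sC (\<lambda>u. F u v)" "\<And>u. Vector_Spaces.linear sT sC (F u)"
    "\<And>v. Vector_Spaces.linear sT sC (\<lambda>u. G u v)" "\<And>u. Vector_Spaces.linear sT sC (G u)"
    "\<And>a m b n. F (tens a m) (tens b n) = G (tens a m) (tens b n)"
  shows "F u v = G u v"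
proof -
  have "F (tens a m) v = G (tens a m) v" for a m
    by (rule ext_pure[OF assms(2) assms(4)]) (rule assms(5))
  then show ?thesis
    by (rule ext_pure[where F="\<lambda>u. F u v" and G="\<lambda>u. G u v", OF assms(1) assms(3)])
qed

lemma lift2:
  fixes sC :: "'k \<Rightarrow> 'c::ab_group_add \<Rightarrow> 'c"
  assumes vsC: "vector_space sC"
    and l1: "\<And>m b n. Vector_Spaces.linear sA sC (\<lambda>a. psi a m b n)"
    and l2: "\<And>a b n. Vector_Spaces.linear (ser_scale sM) sC (\<lambda>m. psi a m b n)"
    and l3: "\<And>a m n. Vector_Spaces.linear sA sC (\<lambda>b. psi a m b n)"
    and l4: "\<And>a m b. Vector_Spaces.linear (ser_scale sM) sC (\<lambda>n. psi a m b n)"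
  obtains B where "\<And>v. Vector_Spaces.linear sT sC (\<lambda>u. B u v)" "\<And>u. Vector_Spaces.linear sT sC (B u)"
    "\<And>a m b n. B (tens a m) (tens b n) = psi a m b n"
proof -
  define Fb where "Fb b n = (SOME F. Vector_Spaces.linear sT sC F \<and> (\<forall>a m. F (tens a m) = psi a m b n))" for b n
  have Fb: "Vector_Spaces.linear sT sC (Fb b n) \<and> (\<forall>a m. Fb b n (tens a m) = psi a m b n)" for b n
  proof -
    have "\<exists>F. Vector_Spaces.linear sT sC F \<and> (\<forall>a m. F (tens a m) = psi a m b n)"
      by (rule lift[OF vsC l1 l2])
    then show ?thesis unfolding Fb_def by (rule someI_ex)
  qed
  have Fb_lin: "Vector_Spaces.linear sT sC (Fb b n)" for b n using Fb by blast
  have Fb_pure: "Fb b n (tens a m) = psi a m b n" for a m b n using Fb by blast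
  have vsT': "vector_space sT" by (rule vsT)
  have Fb_add1: "Fb (b + b') n u = Fb b n u + Fb b' n u" for b b' n u
    by (rule ext_pure[OF Fb_lin]) (auto intro!: linI vsT' vsC simp: lin_add[OF Fb_lin] lin_scale[OF Fb_lin]
         Fb_pure lin_add[OF l3] vs_add_r[OF vsC])
  have Fb_scale1: "Fb (sA c b) n u = sC c (Fb b n u)" for c b n u
    by (rule ext_pure[OF Fb_lin]) (auto intro!: linI vsT' vsC simp: lin_add[OF Fb_lin] lin_scale[OF Fb_lin]
         Fb_pure lin_scale[OF l3] vs_add_r[OF vsC] vs_comm[OF vsC])
  have Fb_add2: "Fb b (n + n') u = Fb b n u + Fb b n' u" for b n n' u
    by (rule ext_pure[where F="Fb b (n + n')" and G="\<lambda>u. Fb b n u + Fb b n' u", OF Fb_lin]) (auto intro!: linI vsT' vsC simp: lin_add[OF Fb_lin] lin_scale[OF Fb_lin]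
         Fb_pure lin_add[OF l4] vs_add_r[OF vsC])
  have Fb_scale2: "Fb b (ser_scale sM c n) u = sC c (Fb b n u)" for c b n u
    by (rule ext_pure[OF Fb_lin]) (auto intro!: linI vsT' vsC simp: lin_add[OF Fb_lin] lin_scale[OF Fb_lin]
         Fb_pure lin_scale[OF l4] vs_add_r[OF vsC] vs_comm[OF vsC])
  define G where "G u = (SOME G. Vector_Spaces.linear sT sC G \<and> (\<forall>b n. G (tens b n) = Fb b n u))" for u
  have G: "Vector_Spaces.linear sT sC (G u) \<and> (\<forall>b n. G u (tens b n) = Fb b n u)" for u
  proof -
    have "\<exists>F. Vector_Spaces.linear sT sC F \<and> (\<forall>b n. F (tens b n) = Fb b n u)"
      by (rule lift[OF vsC], auto intro!: linI vsA vsS vsC simp: Fb_add1 Fb_add2 Fb_scale1 Fb_scale2)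
    then show ?thesis unfolding G_def by (rule someI_ex)
  qed
  have G_lin: "Vector_Spaces.linear sT sC (G u)" for u using G by blast
  have G_pure: "G u (tens b n) = Fb b n u" for u b n using G by blast
  have G_add: "G (u + u') v = G u v + G u' v" for u u' v
    by (rule ext_pure[OF G_lin]) (auto intro!: linI vsT' vsC simp: lin_add[OF G_lin] lin_scale[OF G_lin]
         G_pure lin_add[OF Fb_lin] vs_add_r[OF vsC])
  have G_scale: "G (sT c u) v = sC c (G u v)" for c u v
    by (rule ext_pure[OF G_lin]) (auto intro!: linI vsT' vsC simp: lin_add[OF G_lin] lin_scale[OF G_lin]
         G_pure lin_scale[OF Fb_lin] vs_add_r[OF vsC] vs_comm[OF vsC])
  show ?thesis
  proof (rule that[of G])
    show "Vector_Spaces.linear sT sC (\<lambda>u. G u v)" for v by (rule linI[OF vsT' vsC]) (auto simp: G_add G_scale)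
    show "Vector_Spaces.linear sT sC (G u)" for u by (rule G_lin)
    show "G (tens a m) (tens b n) = psi a m b n" for a m b n by (simp add: G_pure Fb_pure)
  qed
qed

end



lemma lin_via_N:
  fixes g :: "nat \<Rightarrow> 'b::ab_group_add \<Rightarrow> 'c::ab_group_add"
  assumes ev: "\<And>x. \<exists>N0. \<forall>N\<ge>N0. f x = g N x" and l: "\<And>N. Vector_Spaces.linear s1 s2 (g N)"
  shows "Vector_Spaces.linear s1 s2 f"
proof (rule linI)
  show "vector_space s1" using lin_vs1[OF l] .
  show "vector_space s2" using lin_vs2[OF l] .
  fix x y c
  obtain N1 N2 N3 where "\<forall>N\<ge>N1. f x = g N x" "\<forall>N\<ge>N2. f y = g N y" "\<forall>N\<ge>N3. f (x + y) = g N (x + y)"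
    using ev by metis
  then have "f x = g (max N1 (max N2 N3)) x" "f y = g (max N1 (max N2 N3)) y"
     "f (x + y) = g (max N1 (max N2 N3)) (x + y)" by auto
  then show "f (x + y) = f x + f y"
    using lin_add[OF l, of "max N1 (max N2 N3)" x y] by simp
  obtain N4 N5 where "\<forall>N\<ge>N4. f x = g N x" "\<forall>N\<ge>N5. f (s1 c x) = g N (s1 c x)"
    using ev by metis
  then have "f x = g (max N4 N5) x" "f (s1 c x) = g (max N4 N5) (s1 c x)" by auto
  then show "f (s1 c x) = s2 c (f x)"
    using lin_scale[OF l, of "max N4 N5" c x] by simp
qed

lemma sum_poly_ext:
  assumes "\<And>j. g 0 j = 0" "degree p \<le> N"
  shows "(\<Sum>j\<le>N. g (coeff p j) j) = (\<Sum>j\<le>degree p. g (coeff p j) j)"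
  by (rule sum.mono_neutral_right) (auto simp: assms coeff_eq_0)

lemma lin_sum_fun:
  assumes "\<And>i. i \<in> I \<Longrightarrow> Vector_Spaces.linear s1 s2 (f i)" "vector_space s1" "vector_space s2"
  shows "Vector_Spaces.linear s1 s2 (\<lambda>x. \<Sum>i\<in>I. f i x)"
proof (rule linI[OF assms(2,3)])
  fix x y c
  have "(\<Sum>i\<in>I. f i (x + y)) = (\<Sum>i\<in>I. f i x + f i y)"
    by (rule sum.cong) (simp_all add: lin_add[OF assms(1)])
  then show "(\<Sum>i\<in>I. f i (x + y)) = (\<Sum>i\<in>I. f i x) + (\<Sum>i\<in>I. f i y)" by (simp add: sum.distrib)
  have "(\<Sum>i\<in>I. f i (s1 c x)) = (\<Sum>i\<in>I. s2 c (f i x))"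
    by (rule sum.cong) (simp_all add: lin_scale[OF assms(1)])
  then show "(\<Sum>i\<in>I. f i (s1 c x)) = s2 c (\<Sum>i\<in>I. f i x)" by (simp add: vs_sum_r[OF assms(3)])
qed

lemma lin_comp: "Vector_Spaces.linear s1 s2 f \<Longrightarrow> Vector_Spaces.linear s2 s3 g \<Longrightarrow> Vector_Spaces.linear s1 s3 (\<lambda>x. g (f x))"
  using Vector_Spaces.linear_compose[of s1 s2 f s3 g] by (simp add: comp_def)

context setting begin

lemma ser_dx_add: "ser_dx sM (f + g) = ser_dx sM f + ser_dx sM g"
  by (simp add: ser_dx_def fun_eq_iff vs_add_r[OF vsM])
lemma ser_dx_scale: "ser_dx sM (ser_scale sM c f) = ser_scale sM c (ser_dx sM f)"
  by (simp add: ser_dx_def ser_scale_def fun_eq_iff vs_comm[OF vsM])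
lemma ser_dx_lin: "Vector_Spaces.linear (ser_scale sM) (ser_scale sM) (ser_dx sM)"
  by (rule linI[OF vsS vsS]) (auto simp: ser_dx_add ser_dx_scale)
lemma ser_dxn_lin: "Vector_Spaces.linear (ser_scale sM) (ser_scale sM) (ser_dx sM ^^ j)"
proof (induct j)
  case 0 show ?case by (rule linI[OF vsS vsS]) auto
next
  case (Suc j) show ?case using lin_comp[OF Suc ser_dx_lin] by (simp add: comp_def)
qed

lemma mu_add1: "mu (x + y) z = mu x z + mu y z" using lin_add[OF mu_lin1] .
lemma mu_add2: "mu z (x + y) = mu z x + mu z y" using lin_add[OF mu_lin2] .
lemma mu_scale1: "mu (sM c x) z = sM c (mu x z)" using lin_scale[OF mu_lin1] .
lemma mu_scale2: "mu z (sM c x) = sM c (mu z x)" using lin_scale[OF mu_lin2] .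
lemma mu_zero1[simp]: "mu 0 z = 0" using lin_zero[OF mu_lin1] .
lemma mu_zero2[simp]: "mu z 0 = 0" using lin_zero[OF mu_lin2] .
lemma mu_neg1: "mu (- x) z = - mu x z" using lin_neg[OF mu_lin1] .
lemma mu_neg2: "mu z (- x) = - mu z x" using lin_neg[OF mu_lin2] .
lemma mu_diff1: "mu (x - y) z = mu x z - mu y z" using lin_diff[OF mu_lin1] .
lemma mu_diff2: "mu z (x - y) = mu z x - mu z y" using lin_diff[OF mu_lin2] .
lemma mu_sum1: "mu (sum f A) z = (\<Sum>x\<in>A. mu (f x) z)" using lin_sum[OF mu_lin1] .
lemma mu_sum2: "mu z (sum f A) = (\<Sum>x\<in>A. mu z (f x))" using lin_sum[OF mu_lin2] .

lemma ser_mult_lin1: "Vector_Spaces.linear (ser_scale sM) (ser_scale sM) (\<lambda>f. ser_mult mu f g)"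
  by (rule linI[OF vsS vsS]) (auto simp: ser_mult_def ser_scale_def fun_eq_iff mu_add1 mu_scale1
      sum.distrib vs_sum_r[OF vsM])
lemma ser_mult_lin2: "Vector_Spaces.linear (ser_scale sM) (ser_scale sM) (\<lambda>g. ser_mult mu f g)"
  by (rule linI[OF vsS vsS]) (auto simp: ser_mult_def ser_scale_def fun_eq_iff mu_add2 mu_scale2
      sum.distrib vs_sum_r[OF vsM])

definition T1N :: "nat \<Rightarrow> 'a \<Rightarrow> (nat \<Rightarrow> 'm) \<Rightarrow> 'a \<Rightarrow> (nat \<Rightarrow> 'm) \<Rightarrow> 't" where
  "T1N N a m b n = (\<Sum>j\<le>N. tens (coeff (lb a b) j) (ser_mult mu ((ser_dx sM ^^ j) m) n))"
definition T1p :: "'a \<Rightarrow> (nat \<Rightarrow> 'm) \<Rightarrow> 'a \<Rightarrow> (nat \<Rightarrow> 'm) \<Rightarrow> 't" where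
  "T1p a m b n = (\<Sum>j\<le>degree (lb a b). tens (coeff (lb a b) j) (ser_mult mu ((ser_dx sM ^^ j) m) n))"

lemma T1p_N: "degree (lb a b) \<le> N \<Longrightarrow> T1p a m b n = T1N N a m b n"
  unfolding T1p_def T1N_def
  by (rule sum_poly_ext[where g="\<lambda>c j. tens c (ser_mult mu ((ser_dx sM ^^ j) m) n)", symmetric]) auto

lemma T1p_ev: "\<exists>N0. \<forall>N\<ge>N0. T1p a m b n = T1N N a m b n"
  using T1p_N by blast

lemma T1p_lin1: "Vector_Spaces.linear sA sT (\<lambda>a. T1p a m b n)"
  by (rule lin_via_N[OF T1p_ev]) (unfold T1N_def, rule lin_sum_fun[OF _ vsA vsT],
      rule lin_comp[OF lb_lin1 tens_lin1])
lemma T1p_lin3: "Vector_Spaces.linear sA sT (\<lambda>b. T1p a m b n)"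
  by (rule lin_via_N[OF T1p_ev]) (unfold T1N_def, rule lin_sum_fun[OF _ vsA vsT],
      rule lin_comp[OF lb_lin2 tens_lin1])
lemma T1p_lin2: "Vector_Spaces.linear (ser_scale sM) sT (\<lambda>m. T1p a m b n)"
  unfolding T1p_def
  by (rule lin_sum_fun[OF _ vsS vsT], rule lin_comp[OF lin_comp[OF ser_dxn_lin ser_mult_lin1] tens_lin2])
lemma T1p_lin4: "Vector_Spaces.linear (ser_scale sM) sT (\<lambda>n. T1p a m b n)"
  unfolding T1p_def
  by (rule lin_sum_fun[OF _ vsS vsT], rule lin_comp[OF ser_mult_lin2 tens_lin2])

end



context setting begin

definition XN :: "nat \<Rightarrow> 'a \<Rightarrow> (nat \<Rightarrow> 'm) \<Rightarrow> 'm \<Rightarrow> 'm" where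
  "XN N a m f = (\<Sum>p\<le>N. sM (of_nat (fact p)) (mu (m p) (coeff (act a f) p)))"
definition Xp :: "'a \<Rightarrow> (nat \<Rightarrow> 'm) \<Rightarrow> 'm \<Rightarrow> 'm" where
  "Xp a m f = XN (degree (act a f)) a m f"

lemma pair_act_Xp: "pair_act sM act mu n b m = (\<lambda>k. Xp b n (m k))"
  by (simp add: pair_act_def Xp_def XN_def)

lemma Xp_N: "degree (act a f) \<le> N \<Longrightarrow> Xp a m f = XN N a m f"
  unfolding Xp_def XN_def
  by (rule sum_poly_ext[where g="\<lambda>c p. sM (of_nat (fact p)) (mu (m p) c)", symmetric])
     (auto simp: vs_zero_r[OF vsM])

lemma Xp_ev: "\<exists>N0. \<forall>N\<ge>N0. Xp a m f = XN N a m f"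
  using Xp_N by blast

lemma lin_scaleM: "Vector_Spaces.linear sM sM (sM c)"
  by (rule linI[OF vsM vsM]) (auto simp: vs_add_r[OF vsM] vs_comm[OF vsM])

lemma Xp_lin_a: "Vector_Spaces.linear sA sM (\<lambda>a. Xp a m f)"
  by (rule lin_via_N[where g="\<lambda>N a. XN N a m f", OF Xp_ev])
     (unfold XN_def, rule lin_sum_fun[OF _ vsA vsM],
      rule lin_comp[OF lin_comp[OF act_lin1 mu_lin2] lin_scaleM])

lemma Xp_lin_f: "Vector_Spaces.linear sM sM (\<lambda>f. Xp a m f)"
  by (rule lin_via_N[where g="\<lambda>N f. XN N a m f", OF Xp_ev])
     (unfold XN_def, rule lin_sum_fun[OF _ vsM vsM],
      rule lin_comp[OF lin_comp[OF act_lin2 mu_lin2] lin_scaleM])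

lemma Xp_lin_m: "Vector_Spaces.linear (ser_scale sM) sM (\<lambda>m. Xp a m f)"
proof -
  have l: "Vector_Spaces.linear (ser_scale sM) sM (\<lambda>m. m p)" for p :: nat
    by (rule linI[OF vsS vsM]) (auto simp: ser_scale_def)
  show ?thesis unfolding Xp_def XN_def
    by (rule lin_sum_fun[OF _ vsS vsM], rule lin_comp[OF lin_comp[OF l mu_lin1] lin_scaleM])
qed

lemma Xt_ex: "\<exists>X. \<forall>f. Vector_Spaces.linear sT sM (\<lambda>u. X u f) \<and> (\<forall>a m. X (tens a m) f = Xp a m f)"
proof -
  have "\<forall>f. \<exists>F. Vector_Spaces.linear sT sM F \<and> (\<forall>a m. F (tens a m) = Xp a m f)"
    using lift[OF vsM Xp_lin_a Xp_lin_m] by blast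
  then obtain F where "\<forall>f. Vector_Spaces.linear sT sM (F f) \<and> (\<forall>a m. F f (tens a m) = Xp a m f)"
    by metis
  then show ?thesis by (intro exI[of _ "\<lambda>u f. F f u"]) simp
qed

definition Xt :: "'t \<Rightarrow> 'm \<Rightarrow> 'm" where
  "Xt = (SOME X. \<forall>f. Vector_Spaces.linear sT sM (\<lambda>u. X u f) \<and> (\<forall>a m. X (tens a m) f = Xp a m f))"

lemma Xt_prop: "\<forall>f. Vector_Spaces.linear sT sM (\<lambda>u. Xt u f) \<and> (\<forall>a m. Xt (tens a m) f = Xp a m f)"
  unfolding Xt_def using Xt_ex by (rule someI_ex)

lemma Xt_lin_u: "Vector_Spaces.linear sT sM (\<lambda>u. Xt u f)" using Xt_prop by blast
lemma Xt_pure: "Xt (tens a m) f = Xp a m f" using Xt_prop by blast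

lemma Xt_add_u: "Xt (u + v) f = Xt u f + Xt v f" using lin_add[OF Xt_lin_u] .
lemma Xt_scale_u: "Xt (sT c u) f = sM c (Xt u f)" using lin_scale[OF Xt_lin_u] .
lemma Xt_add_fun: "Xt (u + v) = (\<lambda>f. Xt u f + Xt v f)" by (rule ext) (rule Xt_add_u)
lemma Xt_scale_fun: "Xt (sT c u) = (\<lambda>f. sM c (Xt u f))" by (rule ext) (rule Xt_scale_u)
lemma Xt_zero_u: "Xt 0 f = 0" using lin_zero[OF Xt_lin_u] .
lemma Xt_diff_u: "Xt (u - v) f = Xt u f - Xt v f" using lin_diff[OF Xt_lin_u] .

lemma Xt_lin_f: "Vector_Spaces.linear sM sM (Xt u)"
proof (rule linI[OF vsM vsM])
  fix f g c
  show "Xt u (f + g) = Xt u f + Xt u g"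
    by (rule ext_pure[where F="\<lambda>u. Xt u (f + g)" and G="\<lambda>u. Xt u f + Xt u g", OF Xt_lin_u])
       (auto intro!: linI vsT vsM simp: Xt_add_u Xt_scale_u vs_add_r[OF vsM] Xt_pure lin_add[OF Xp_lin_f])
  show "Xt u (sM c f) = sM c (Xt u f)"
    by (rule ext_pure[where F="\<lambda>u. Xt u (sM c f)" and G="\<lambda>u. sM c (Xt u f)", OF Xt_lin_u])
       (auto intro!: linI vsT vsM simp: Xt_add_u Xt_scale_u vs_add_r[OF vsM] vs_comm[OF vsM] Xt_pure lin_scale[OF Xp_lin_f])
qed

lemma ser_map_lin: "Vector_Spaces.linear sM sM d \<Longrightarrow> Vector_Spaces.linear (ser_scale sM) (ser_scale sM) (ser_map d)"
  by (rule linI[OF vsS vsS]) (auto simp: ser_map_def ser_scale_def fun_eq_iff lin_add lin_scale)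

definition rho :: "'t \<Rightarrow> 't \<Rightarrow> 't" where
  "rho u = (SOME F. Vector_Spaces.linear sT sT F \<and> (\<forall>b n. F (tens b n) = tens b (ser_map (Xt u) n)))"

lemma rho_prop: "Vector_Spaces.linear sT sT (rho u) \<and> (\<forall>b n. rho u (tens b n) = tens b (ser_map (Xt u) n))"
proof -
  have "\<exists>F. Vector_Spaces.linear sT sT F \<and> (\<forall>b n. F (tens b n) = tens b (ser_map (Xt u) n))"
    by (rule lift[OF vsT tens_lin1], rule lin_comp[OF ser_map_lin[OF Xt_lin_f] tens_lin2])
  then show ?thesis unfolding rho_def by (rule someI_ex)
qed

lemma rho_lin: "Vector_Spaces.linear sT sT (rho u)" using rho_prop by blast
lemma rho_pure: "rho u (tens b n) = tens b (ser_map (Xt u) n)" using rho_prop by blast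

lemma ser_map_add_fun: "ser_map (\<lambda>f. d1 f + d2 f) n = ser_map d1 n + ser_map d2 n"
  by (simp add: ser_map_def fun_eq_iff)
lemma ser_map_scale_fun: "ser_map (\<lambda>f. sM c (d f)) n = ser_scale sM c (ser_map d n)"
  by (simp add: ser_map_def ser_scale_def fun_eq_iff)

lemma rho_add_u: "rho (u + u') v = rho u v + rho u' v"
  by (rule ext_pure[where F="rho (u + u')" and G="\<lambda>v. rho u v + rho u' v", OF rho_lin])
     (auto intro!: linI vsT simp: lin_add[OF rho_lin] lin_scale[OF rho_lin] vs_add_r[OF vsT] rho_pure
       Xt_add_fun ser_map_add_fun tens_add2)
lemma rho_scale_u: "rho (sT c u) v = sT c (rho u v)"
  by (rule ext_pure[where F="rho (sT c u)" and G="\<lambda>v. sT c (rho u v)", OF rho_lin])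
     (auto intro!: linI vsT simp: lin_add[OF rho_lin] lin_scale[OF rho_lin] vs_add_r[OF vsT] vs_comm[OF vsT] rho_pure
       Xt_scale_fun ser_map_scale_fun tens_scale2)
lemma rho_lin_u: "Vector_Spaces.linear sT sT (\<lambda>u. rho u v)"
  by (rule linI[OF vsT vsT]) (auto simp: rho_add_u rho_scale_u)

definition T1 :: "'t \<Rightarrow> 't \<Rightarrow> 't" where
  "T1 = (SOME B. (\<forall>v. Vector_Spaces.linear sT sT (\<lambda>u. B u v)) \<and> (\<forall>u. Vector_Spaces.linear sT sT (B u)) \<and>
      (\<forall>a m b n. B (tens a m) (tens b n) = T1p a m b n))"

lemma T1_prop: "(\<forall>v. Vector_Spaces.linear sT sT (\<lambda>u. T1 u v)) \<and> (\<forall>u. Vector_Spaces.linear sT sT (T1 u)) \<and>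
      (\<forall>a m b n. T1 (tens a m) (tens b n) = T1p a m b n)"
proof -
  obtain B where "\<And>v. Vector_Spaces.linear sT sT (\<lambda>u. B u v)" "\<And>u. Vector_Spaces.linear sT sT (B u)"
    "\<And>a m b n. B (tens a m) (tens b n) = T1p a m b n"
    using lift2[OF vsT T1p_lin1 T1p_lin2 T1p_lin3 T1p_lin4] by blast
  then have "\<exists>B. (\<forall>v. Vector_Spaces.linear sT sT (\<lambda>u. B u v)) \<and> (\<forall>u. Vector_Spaces.linear sT sT (B u)) \<and>
      (\<forall>a m b n. B (tens a m) (tens b n) = T1p a m b n)" by blast
  then show ?thesis unfolding T1_def by (rule someI_ex)
qed

lemma T1_lin1: "Vector_Spaces.linear sT sT (\<lambda>u. T1 u v)" using T1_prop by blast
lemma T1_lin2: "Vector_Spaces.linear sT sT (T1 u)" using T1_prop by blast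
lemma T1_pure: "T1 (tens a m) (tens b n) = T1p a m b n" using T1_prop by blast

definition br :: "'t \<Rightarrow> 't \<Rightarrow> 't" where
  "br u v = T1 u v + rho u v - rho v u"

lemma br_lin1: "Vector_Spaces.linear sT sT (\<lambda>u. br u v)"
  unfolding br_def by (rule linI[OF vsT vsT])
    (auto simp: lin_add[OF T1_lin1] lin_scale[OF T1_lin1] rho_add_u rho_scale_u lin_add[OF rho_lin]
      lin_scale[OF rho_lin] vs_add_r[OF vsT] vs_diff_r[OF vsT])
lemma br_lin2: "Vector_Spaces.linear sT sT (br u)"
  unfolding br_def by (rule linI[OF vsT vsT])
    (auto simp: lin_add[OF T1_lin2] lin_scale[OF T1_lin2] rho_add_u rho_scale_u lin_add[OF rho_lin]
      lin_scale[OF rho_lin] vs_add_r[OF vsT] vs_diff_r[OF vsT])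

lemma br_pure: "br (tens a m) (tens b n) = chain_bracket_pure sM lb act mu tens a m b n"
  unfolding br_def chain_bracket_pure_def
  by (simp add: T1_pure rho_pure T1p_def pair_act_Xp ser_map_def Xt_pure)

end



context setting begin

lemma lin_add_fun: "Vector_Spaces.linear s1 s2 f \<Longrightarrow> Vector_Spaces.linear s1 s2 g \<Longrightarrow>
   Vector_Spaces.linear s1 s2 (\<lambda>x. f x + g x)"
  by (rule linI[OF lin_vs1 lin_vs2]) (auto simp: lin_add lin_scale vs_add_r[OF lin_vs2])

definition D0op :: "'t \<Rightarrow> 't" where
  "D0op = (SOME F. Vector_Spaces.linear sT sT F \<and> (\<forall>a m. F (tens a m) = tens (dA a) m + tens a (ser_dx sM m)))"

lemma D0op_prop: "Vector_Spaces.linear sT sT D0op \<and> (\<forall>a m. D0op (tens a m) = tens (dA a) m + tens a (ser_dx sM m))"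
proof -
  have "\<exists>F. Vector_Spaces.linear sT sT F \<and> (\<forall>a m. F (tens a m) = tens (dA a) m + tens a (ser_dx sM m))"
    by (rule lift[OF vsT]) (rule lin_add_fun, rule lin_comp[OF dA_lin tens_lin1], rule tens_lin1,
        rule lin_add_fun, rule tens_lin2, rule lin_comp[OF ser_dx_lin tens_lin2])
  then show ?thesis unfolding D0op_def by (rule someI_ex)
qed
lemma D0op_lin: "Vector_Spaces.linear sT sT D0op" using D0op_prop by blast
lemma D0op_pure: "D0op (tens a m) = tens (dA a) m + tens a (ser_dx sM m)" using D0op_prop by blast

definition Dop :: "'t \<Rightarrow> 't" where
  "Dop = (SOME F. Vector_Spaces.linear sT sT F \<and> (\<forall>a m. F (tens a m) = tens (dA a) m + tens a (ser_map dM m)))"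

lemma Dop_prop: "Vector_Spaces.linear sT sT Dop \<and> (\<forall>a m. Dop (tens a m) = tens (dA a) m + tens a (ser_map dM m))"
proof -
  have "\<exists>F. Vector_Spaces.linear sT sT F \<and> (\<forall>a m. F (tens a m) = tens (dA a) m + tens a (ser_map dM m))"
    by (rule lift[OF vsT]) (rule lin_add_fun, rule lin_comp[OF dA_lin tens_lin1], rule tens_lin1,
        rule lin_add_fun, rule tens_lin2, rule lin_comp[OF ser_map_lin[OF dM_lin] tens_lin2])
  then show ?thesis unfolding Dop_def by (rule someI_ex)
qed
lemma Dop_lin: "Vector_Spaces.linear sT sT Dop" using Dop_prop by blast
lemma Dop_pure: "Dop (tens a m) = tens (dA a) m + tens a (ser_map dM m)" using Dop_prop by blast

lemma sM_of_nat_add: "sM (of_nat i + of_nat j) x = sM (of_nat i) x + sM (of_nat j) x"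
  by (rule vs_add_l[OF vsM])

lemma leibniz: "ser_dx sM (ser_mult mu f g) = ser_mult mu (ser_dx sM f) g + ser_mult mu f (ser_dx sM g)"
proof (rule ext)
  fix k
  define h where "h i = mu (f i) (g (Suc k - i))" for i
  have e1: "ser_mult mu (ser_dx sM f) g k = (\<Sum>i\<le>Suc k. sM (of_nat i) (h i))"
  proof -
    have "ser_mult mu (ser_dx sM f) g k = (\<Sum>i\<le>k. sM (of_nat (Suc i)) (h (Suc i)))"
      by (simp add: ser_mult_def ser_dx_def h_def mu_scale1)
    also have "\<dots> = (\<Sum>i\<le>Suc k. sM (of_nat i) (h i))"
      by (subst sum.atMost_Suc_shift) (simp add: vs_zero_l[OF vsM] del: of_nat_Suc)
    finally show ?thesis .
  qed
  have e2: "ser_mult mu f (ser_dx sM g) k = (\<Sum>i\<le>Suc k. sM (of_nat (Suc k - i)) (h i))"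
  proof -
    have "ser_mult mu f (ser_dx sM g) k = (\<Sum>i\<le>k. sM (of_nat (Suc k - i)) (h i))"
      unfolding ser_mult_def ser_dx_def h_def
      by (rule sum.cong[OF refl]) (simp add: mu_scale2 Suc_diff_le)
    also have "\<dots> = (\<Sum>i\<le>Suc k. sM (of_nat (Suc k - i)) (h i))"
      by (simp add: vs_zero_l[OF vsM])
    finally show ?thesis .
  qed
  have "ser_dx sM (ser_mult mu f g) k = (\<Sum>i\<le>Suc k. sM (of_nat (Suc k)) (h i))"
    unfolding ser_dx_def ser_mult_def h_def by (rule vs_sum_r[OF vsM])
  also have "\<dots> = (\<Sum>i\<le>Suc k. sM (of_nat i) (h i) + sM (of_nat (Suc k - i)) (h i))"
  proof (rule sum.cong[OF refl])
    fix x assume "x \<in> {..Suc k}"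
    then have "(of_nat x + of_nat (Suc k - x) :: 'k) = of_nat (Suc k)"
      by (simp flip: of_nat_add)
    then show "sM (of_nat (Suc k)) (h x) = sM (of_nat x) (h x) + sM (of_nat (Suc k - x)) (h x)"
      by (simp only: sM_of_nat_add[symmetric])
  qed
  finally show "ser_dx sM (ser_mult mu f g) k = (ser_mult mu (ser_dx sM f) g + ser_mult mu f (ser_dx sM g)) k"
    by (simp add: e1 e2 sum.distrib)
qed

lemma T1p_dA1: "T1p (dA a) m b n + T1p a (ser_dx sM m) b n = 0"
proof -
  define N where "N = Suc (max (degree (lb a b)) (degree (lb (dA a) b)))"
  define X where "X j = ser_mult mu ((ser_dx sM ^^ j) m) n" for j
  have c0: "coeff (lb a b) N = 0" by (rule coeff_eq_0) (simp add: N_def)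
  have "T1p (dA a) m b n = T1N (Suc N) (dA a) m b n" by (rule T1p_N) (simp add: N_def)
  also have "\<dots> = (\<Sum>j\<le>N. tens (- coeff (lb a b) j) (X (Suc j)))"
    unfolding T1N_def by (subst sum.atMost_Suc_shift) (simp add: sesq_lb1 X_def del: funpow.simps)
  also have "\<dots> = - (\<Sum>j\<le>N. tens (coeff (lb a b) j) (X (Suc j)))"
    by (simp add: tens_neg1 sum_negf)
  finally have 1: "T1p (dA a) m b n = - (\<Sum>j\<le>N. tens (coeff (lb a b) j) (X (Suc j)))" .
  have "T1p a (ser_dx sM m) b n = T1N N a (ser_dx sM m) b n" by (rule T1p_N) (simp add: N_def)
  also have "\<dots> = (\<Sum>j\<le>N. tens (coeff (lb a b) j) (X (Suc j)))"
    by (simp add: T1N_def X_def funpow_Suc_right del: funpow.simps)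
  finally show ?thesis using 1 by simp
qed

lemma T1p_dA2: "T1p a m (dA b) n + T1p a m b (ser_dx sM n) =
    (\<Sum>j\<le>degree (lb a b). tens (dA (coeff (lb a b) j)) (ser_mult mu ((ser_dx sM ^^ j) m) n)
       + tens (coeff (lb a b) j) (ser_dx sM (ser_mult mu ((ser_dx sM ^^ j) m) n)))"
proof -
  define N where "N = Suc (max (degree (lb a b)) (degree (lb a (dA b))))"
  define X where "X j = ser_mult mu ((ser_dx sM ^^ j) m) n" for j
  define c where "c j = coeff (lb a b) j" for j
  have c0: "c (Suc N) = 0" "c N = 0" by (auto intro!: coeff_eq_0 simp: N_def c_def)
  have s2: "(\<Sum>j\<le>Suc N. tens (if j = 0 then 0 else c (j - 1)) (X j)) = (\<Sum>j\<le>N. tens (c j) (X (Suc j)))"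
    by (subst sum.atMost_Suc_shift) simp
  have "T1p a m (dA b) n = T1N (Suc N) a m (dA b) n" by (rule T1p_N) (simp add: N_def)
  also have "\<dots> = (\<Sum>j\<le>Suc N. tens (dA (c j)) (X j) + tens (if j = 0 then 0 else c (j - 1)) (X j))"
    unfolding T1N_def by (rule sum.cong[OF refl]) (simp add: sesq_lb2 X_def c_def tens_add1 del: funpow.simps)
  also have "\<dots> = (\<Sum>j\<le>Suc N. tens (dA (c j)) (X j)) + (\<Sum>j\<le>N. tens (c j) (X (Suc j)))"
    by (simp only: sum.distrib s2)
  finally have 1: "T1p a m (dA b) n = (\<Sum>j\<le>Suc N. tens (dA (c j)) (X j)) + (\<Sum>j\<le>N. tens (c j) (X (Suc j)))" .
  have 2: "T1p a m b (ser_dx sM n) = (\<Sum>j\<le>Suc N. tens (c j) (ser_mult mu ((ser_dx sM ^^ j) m) (ser_dx sM n)))"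
    unfolding c_def by (rule T1p_N[unfolded T1N_def]) (simp add: N_def)
  have 3: "(\<Sum>j\<le>degree (lb a b). tens (dA (c j)) (X j) + tens (c j) (ser_dx sM (X j))) =
     (\<Sum>j\<le>Suc N. tens (dA (c j)) (X j) + tens (c j) (ser_dx sM (X j)))"
    unfolding c_def
    by (rule sum_poly_ext[where g="\<lambda>cc j. tens (dA cc) (X j) + tens cc (ser_dx sM (X j))", symmetric])
       (auto simp: lin_zero[OF dA_lin] N_def)
  have 4: "(\<Sum>j\<le>Suc N. tens (c j) (ser_dx sM (X j))) =
      (\<Sum>j\<le>Suc N. tens (c j) (X (Suc j))) + (\<Sum>j\<le>Suc N. tens (c j) (ser_mult mu ((ser_dx sM ^^ j) m) (ser_dx sM n)))"
    by (simp add: X_def leibniz tens_add2 sum.distrib)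
  have 5: "(\<Sum>j\<le>Suc N. tens (c j) (X (Suc j))) = (\<Sum>j\<le>N. tens (c j) (X (Suc j)))"
    using c0 by simp
  have "T1p a m (dA b) n + T1p a m b (ser_dx sM n) =
     (\<Sum>j\<le>Suc N. tens (dA (c j)) (X j)) + (\<Sum>j\<le>Suc N. tens (c j) (ser_dx sM (X j)))"
    unfolding 1 2 4 5 by (simp add: add.assoc)
  also have "\<dots> = (\<Sum>j\<le>degree (lb a b). tens (dA (c j)) (X j) + tens (c j) (ser_dx sM (X j)))"
    unfolding 3 by (simp add: sum.distrib)
  finally show ?thesis by (simp add: c_def X_def)
qed

end



lemma lin_zero_fun: "vector_space s1 \<Longrightarrow> vector_space s2 \<Longrightarrow> Vector_Spaces.linear s1 s2 (\<lambda>x. 0)"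
  by (rule linI) (auto simp: vs_zero_r)
lemma lin_diff_fun: "Vector_Spaces.linear s1 s2 f \<Longrightarrow> Vector_Spaces.linear s1 s2 g \<Longrightarrow>
   Vector_Spaces.linear s1 s2 (\<lambda>x. f x - g x)"
  by (rule linI[OF lin_vs1 lin_vs2]) (auto simp: lin_add lin_scale vs_diff_r[OF lin_vs2])

context setting begin

lemma T1_D0_left: "T1 (D0op u) v = 0"
proof (rule ext_pure2[where F="\<lambda>u v. T1 (D0op u) v" and G="\<lambda>u v. 0"])
  show "Vector_Spaces.linear sT sT (\<lambda>u. T1 (D0op u) v)" for v by (rule lin_comp[OF D0op_lin T1_lin1])
  show "Vector_Spaces.linear sT sT (T1 (D0op u))" for u by (rule T1_lin2)
  show "Vector_Spaces.linear sT sT (\<lambda>u. 0)" by (rule lin_zero_fun[OF vsT vsT])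
  then show "Vector_Spaces.linear sT sT (\<lambda>v. 0)" .
  show "T1 (D0op (tens a m)) (tens b n) = 0" for a m b n
    by (simp add: D0op_pure lin_add[OF T1_lin1] T1_pure T1p_dA1)
qed

lemma T1_D0_right: "T1 u (D0op v) = D0op (T1 u v)"
proof (rule ext_pure2[where F="\<lambda>u v. T1 u (D0op v)" and G="\<lambda>u v. D0op (T1 u v)"])
  show "Vector_Spaces.linear sT sT (\<lambda>u. T1 u (D0op v))" for v by (rule T1_lin1)
  show "Vector_Spaces.linear sT sT (\<lambda>v. T1 u (D0op v))" for u by (rule lin_comp[OF D0op_lin T1_lin2])
  show "Vector_Spaces.linear sT sT (\<lambda>u. D0op (T1 u v))" for v by (rule lin_comp[OF T1_lin1 D0op_lin])
  show "Vector_Spaces.linear sT sT (\<lambda>v. D0op (T1 u v))" for u by (rule lin_comp[OF T1_lin2 D0op_lin])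
  show "T1 (tens a m) (D0op (tens b n)) = D0op (T1 (tens a m) (tens b n))" for a m b n
  proof -
    have "T1 (tens a m) (D0op (tens b n)) = T1p a m (dA b) n + T1p a m b (ser_dx sM n)"
      by (simp add: D0op_pure lin_add[OF T1_lin2] T1_pure)
    also have "\<dots> = D0op (T1p a m b n)"
      unfolding T1p_dA2 by (simp add: T1p_def lin_sum[OF D0op_lin] D0op_pure)
    finally show ?thesis by (simp add: T1_pure)
  qed
qed

lemma Xp_D0: "Xp (dA a) m f + Xp a (ser_dx sM m) f = 0"
proof -
  define N where "N = Suc (max (degree (act a f)) (degree (act (dA a) f)))"
  define h where "h p = mu (m (Suc p)) (coeff (act a f) p)" for p
  have c0: "coeff (act a f) N = 0" by (rule coeff_eq_0) (simp add: N_def)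
  have "Xp (dA a) m f = XN (Suc N) (dA a) m f" by (rule Xp_N) (simp add: N_def)
  also have "\<dots> = (\<Sum>p\<le>N. sM (of_nat (fact (Suc p))) (mu (m (Suc p)) (- coeff (act a f) p)))"
    unfolding XN_def by (subst sum.atMost_Suc_shift) (simp add: sesq_act1 vs_zero_r[OF vsM] del: fact_Suc of_nat_Suc)
  also have "\<dots> = - (\<Sum>p\<le>N. sM (of_nat (fact (Suc p))) (h p))"
    by (simp add: h_def mu_neg2 vs_neg_r[OF vsM] sum_negf del: fact_Suc of_nat_Suc)
  finally have 1: "Xp (dA a) m f = - (\<Sum>p\<le>N. sM (of_nat (fact (Suc p))) (h p))" .
  have "Xp a (ser_dx sM m) f = XN N a (ser_dx sM m) f" by (rule Xp_N) (simp add: N_def)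
  also have "\<dots> = (\<Sum>p\<le>N. sM (of_nat (fact (Suc p))) (h p))"
    unfolding XN_def
  proof (rule sum.cong[OF refl])
    fix p
    have "(of_nat (fact p) * of_nat (Suc p) :: 'k) = of_nat (fact (Suc p))"
      by (simp add: algebra_simps)
    then show "sM (of_nat (fact p)) (mu (ser_dx sM m p) (coeff (act a f) p)) = sM (of_nat (fact (Suc p))) (h p)"
      by (simp add: ser_dx_def h_def mu_scale1 vs_mult[OF vsM] del: fact_Suc of_nat_Suc)
  qed
  finally show ?thesis using 1 by simp
qed

lemma Xt_D0: "Xt (D0op u) f = 0"
  by (rule ext_pure[where F="\<lambda>u. Xt (D0op u) f" and G="\<lambda>u. 0", OF lin_comp[OF D0op_lin Xt_lin_u] lin_zero_fun[OF vsT vsM]])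
     (simp add: D0op_pure Xt_add_u Xt_pure Xp_D0)

lemma Xp_deriv: "Xp a m (mu f g) = mu (Xp a m f) g + mu f (Xp a m g)"
proof -
  define N where "N = max (degree (act a (mu f g))) (max (degree (act a f)) (degree (act a g)))"
  have "Xp a m (mu f g) = XN N a m (mu f g)" "Xp a m f = XN N a m f" "Xp a m g = XN N a m g"
    by (rule Xp_N, simp add: N_def)+
  moreover have "XN N a m (mu f g) = mu (XN N a m f) g + mu f (XN N a m g)"
    unfolding XN_def
    by (simp add: act_mu mu_add2 vs_add_r[OF vsM] sum.distrib mu_sum1 mu_sum2 mu_scale1 mu_scale2 mu_assoc)
       (simp add: mu_assoc[symmetric] mu_comm)
  ultimately show ?thesis by simp
qed

lemma Xt_deriv: "Xt u (mu f g) = mu (Xt u f) g + mu f (Xt u g)"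
  by (rule ext_pure[where F="\<lambda>u. Xt u (mu f g)" and G="\<lambda>u. mu (Xt u f) g + mu f (Xt u g)", OF Xt_lin_u])
     (auto intro!: lin_add_fun lin_comp[OF Xt_lin_u mu_lin1] lin_comp[OF Xt_lin_u mu_lin2] simp: Xt_pure Xp_deriv)

lemma ser_map_dx: "Vector_Spaces.linear sM sM d \<Longrightarrow> ser_map d (ser_dx sM n) = ser_dx sM (ser_map d n)"
  by (simp add: ser_map_def ser_dx_def fun_eq_iff lin_scale)
lemma ser_map_dxn: "Vector_Spaces.linear sM sM d \<Longrightarrow> ser_map d ((ser_dx sM ^^ j) n) = (ser_dx sM ^^ j) (ser_map d n)"
  by (induct j) (auto simp: ser_map_dx)

lemma rho_D0: "rho u (D0op v) = D0op (rho u v)"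
  by (rule ext_pure[where F="\<lambda>v. rho u (D0op v)" and G="\<lambda>v. D0op (rho u v)", OF lin_comp[OF D0op_lin rho_lin] lin_comp[OF rho_lin D0op_lin]])
     (simp add: D0op_pure rho_pure lin_add[OF rho_lin] ser_map_dx[OF Xt_lin_f])

lemma ser_map_mult: "ser_map (Xt u) (ser_mult mu f g) = ser_mult mu (ser_map (Xt u) f) g + ser_mult mu f (ser_map (Xt u) g)"
  by (simp add: ser_map_def ser_mult_def fun_eq_iff lin_sum[OF Xt_lin_f] Xt_deriv sum.distrib)

lemma rho_T1: "rho u (T1 v w) = T1 (rho u v) w + T1 v (rho u w)"
proof (rule ext_pure2[where F="\<lambda>v w. rho u (T1 v w)" and G="\<lambda>v w. T1 (rho u v) w + T1 v (rho u w)"])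
  show "Vector_Spaces.linear sT sT (\<lambda>v. rho u (T1 v w))" for w by (rule lin_comp[OF T1_lin1 rho_lin])
  show "Vector_Spaces.linear sT sT (\<lambda>w. rho u (T1 v w))" for v by (rule lin_comp[OF T1_lin2 rho_lin])
  show "Vector_Spaces.linear sT sT (\<lambda>v. T1 (rho u v) w + T1 v (rho u w))" for w
    by (rule lin_add_fun[OF lin_comp[OF rho_lin T1_lin1] T1_lin1])
  show "Vector_Spaces.linear sT sT (\<lambda>w. T1 (rho u v) w + T1 v (rho u w))" for v
    by (rule lin_add_fun[OF T1_lin2 lin_comp[OF rho_lin T1_lin2]])
  show "rho u (T1 (tens a m) (tens b n)) = T1 (rho u (tens a m)) (tens b n) + T1 (tens a m) (rho u (tens b n))" for a m b n
    by (simp add: T1_pure rho_pure T1p_def lin_sum[OF rho_lin] ser_map_mult ser_map_dxn[OF Xt_lin_f]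
        tens_add2 sum.distrib)
qed

end



context setting begin

lemma ser_dxn_apply: "(ser_dx sM ^^ j) m r = sM (of_nat (fact (r + j)) / of_nat (fact r)) (m (r + j))"
proof (induct j arbitrary: r)
  case 0 then show ?case by (simp add: vs_one[OF vsM])
next
  case (Suc j)
  have "(ser_dx sM ^^ Suc j) m r = sM (of_nat (Suc r)) ((ser_dx sM ^^ j) m (Suc r))"
    by (simp add: ser_dx_def del: of_nat_Suc)
  also have "\<dots> = sM (of_nat (Suc r) * (of_nat (fact (Suc r + j)) / of_nat (fact (Suc r)))) (m (Suc r + j))"
    by (simp add: Suc vs_mult[OF vsM] del: of_nat_Suc fact_Suc)
  also have "of_nat (Suc r) * (of_nat (fact (Suc r + j)) / of_nat (fact (Suc r))) = (of_nat (fact (r + Suc j)) / of_nat (fact r) :: 'k)"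
  proof -
    have f: "(of_nat (fact (Suc r)) :: 'k) = of_nat (Suc r) * of_nat (fact r)"
      by (metis fact_Suc of_nat_id of_nat_mult)
    have nz: "(of_nat (Suc r) :: 'k) \<noteq> 0" "(of_nat (fact r) :: 'k) \<noteq> 0" by (simp_all del: of_nat_Suc)
    have "Suc r + j = r + Suc j" by simp
    then show ?thesis unfolding f using nz by (simp add: field_simps del: of_nat_Suc)
  qed
  finally show ?case by simp
qed

lemma act_zero_a: "act 0 f = 0"
  by (rule poly_eqI) (simp add: lin_zero[OF act_lin1])

lemma Xp_zero_a: "Xp 0 m f = 0"
  by (simp add: Xp_def XN_def act_zero_a vs_zero_r[OF vsM])

lemma Xp_comp_expand:
  assumes "degree (act b f) \<le> N"
  shows "Xp a m (Xp b n f) = Xp b (ser_map (Xp a m) n) f +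
     (\<Sum>p\<le>N. sM (of_nat (fact p)) (mu (n p) (Xp a m (coeff (act b f) p))))"
proof -
  have "Xp a m (Xp b n f) = Xp a m (XN N b n f)" using Xp_N[OF assms] by simp
  also have "\<dots> = (\<Sum>p\<le>N. sM (of_nat (fact p)) (mu (Xp a m (n p)) (coeff (act b f) p)) +
        sM (of_nat (fact p)) (mu (n p) (Xp a m (coeff (act b f) p))))"
    by (simp add: XN_def lin_sum[OF Xp_lin_f] lin_scale[OF Xp_lin_f] Xp_deriv vs_add_r[OF vsM])
  also have "\<dots> = XN N b (ser_map (Xp a m) n) f +
     (\<Sum>p\<le>N. sM (of_nat (fact p)) (mu (n p) (Xp a m (coeff (act b f) p))))"
    by (simp add: sum.distrib XN_def ser_map_def)
  finally show ?thesis using Xp_N[OF assms, of "ser_map (Xp a m) n"] by simp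
qed

end



lemma sum3:
  assumes "finite A" "\<And>x. finite (B x)" "\<And>x y. finite (C x y)"
  shows "(\<Sum>x\<in>A. \<Sum>y\<in>B x. \<Sum>z\<in>C x y. g x y z) = (\<Sum>(x,y,z)\<in>{(x,y,z). x\<in>A \<and> y\<in>B x \<and> z\<in>C x y}. g x y z)"
proof -
  have "(\<Sum>x\<in>A. \<Sum>y\<in>B x. \<Sum>z\<in>C x y. g x y z) = (\<Sum>x\<in>A. \<Sum>(y,z)\<in>Sigma (B x) (C x). g x y z)"
    by (rule sum.cong[OF refl]) (rule sum.Sigma, auto simp: assms)
  also have "\<dots> = (\<Sum>(x,yz)\<in>Sigma A (\<lambda>x. Sigma (B x) (C x)). (case yz of (y, z) \<Rightarrow> g x y z))"
    by (rule sum.Sigma) (auto simp: assms)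
  also have "Sigma A (\<lambda>x. Sigma (B x) (C x)) = {(x,y,z). x\<in>A \<and> y\<in>B x \<and> z\<in>C x y}" by auto
  finally show ?thesis by (simp add: case_prod_beta')
qed

context setting begin

lemma reidx:
  fixes E :: "nat \<Rightarrow> nat \<Rightarrow> 'm" and w :: "nat \<Rightarrow> nat \<Rightarrow> 'm"
  assumes Ev: "\<And>i q. J < i \<or> Q < q \<Longrightarrow> E i q = 0" and K: "Q + J \<le> K"
  shows "(\<Sum>j\<le>K. \<Sum>q\<le>K. \<Sum>r\<le>q. sM (of_nat (fact q) * (of_nat (fact (r+j)) / of_nat (fact r))) (mu (w (r+j) (q-r)) (E j q)))
   = (\<Sum>k\<le>K. \<Sum>p\<le>K. \<Sum>i\<le>k. sM (of_nat (fact k) * of_nat (fact p) * of_nat ((k+p-i) choose p)) (mu (w k p) (E i (k+p-i))))"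
proof -
  define F where "F = (\<lambda>(j, q, r). sM (of_nat (fact q) * (of_nat (fact (r+j)) / of_nat (fact r))) (mu (w (r+j) (q-r)) (E j q)))"
  define T where "T = (\<lambda>(k, p, i). sM (of_nat (fact k) * of_nat (fact p) * of_nat ((k+p-i) choose p)) (mu (w k p) (E i (k+p-i))))"
  define S1 where "S1 = {(j,q,r). j\<in>{..K} \<and> q\<in>{..K} \<and> r\<in>{..q}}"
  define S2 where "S2 = {(k,p,i). k\<in>{..K} \<and> p\<in>{..K} \<and> i\<in>{..k}}"
  define S1' where "S1' = {(j,q,r). j \<le> J \<and> q \<le> Q \<and> r \<le> q}"
  define S2' where "S2' = {(k,p,i). k \<le> K \<and> p \<le> K \<and> i \<le> k \<and> i \<le> J \<and> k + p - i \<le> Q}"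
  have fin1: "finite S1" unfolding S1_def
    by (rule finite_subset[of _ "{..K} \<times> {..K} \<times> {..K}"]) auto
  have fin2: "finite S2" unfolding S2_def
    by (rule finite_subset[of _ "{..K} \<times> {..K} \<times> {..K}"]) auto
  have L: "(\<Sum>j\<le>K. \<Sum>q\<le>K. \<Sum>r\<le>q. sM (of_nat (fact q) * (of_nat (fact (r+j)) / of_nat (fact r))) (mu (w (r+j) (q-r)) (E j q)))
      = sum F S1"
    unfolding F_def S1_def by (subst sum3) (auto simp: case_prod_beta')
  have R: "(\<Sum>k\<le>K. \<Sum>p\<le>K. \<Sum>i\<le>k. sM (of_nat (fact k) * of_nat (fact p) * of_nat ((k+p-i) choose p)) (mu (w k p) (E i (k+p-i))))
      = sum T S2"
    unfolding T_def S2_def by (subst sum3) (auto simp: case_prod_beta')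
  have L': "sum F S1 = sum F S1'"
  proof (rule sum.mono_neutral_right[OF fin1])
    show "S1' \<subseteq> S1" using K by (auto simp: S1_def S1'_def)
    show "\<forall>x\<in>S1 - S1'. F x = 0"
    proof
      fix x assume "x \<in> S1 - S1'"
      then obtain j q r where x: "x = (j, q, r)" "\<not> (j \<le> J \<and> q \<le> Q)" by (auto simp: S1_def S1'_def)
      then have "J < j \<or> Q < q" by (auto simp: not_le)
      then show "F x = 0" using Ev[of j q] x by (simp add: F_def vs_zero_r[OF vsM])
    qed
  qed
  have R': "sum T S2 = sum T S2'"
  proof (rule sum.mono_neutral_right[OF fin2])
    show "S2' \<subseteq> S2" using K by (auto simp: S2_def S2'_def)
    show "\<forall>x\<in>S2 - S2'. T x = 0"
    proof
      fix x assume "x \<in> S2 - S2'"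
      then obtain k p i where x: "x = (k, p, i)" "\<not> (i \<le> J \<and> k + p - i \<le> Q)" by (auto simp: S2_def S2'_def)
      then have "J < i \<or> Q < k + p - i" by (auto simp: not_le)
      then show "T x = 0" using Ev[of i "k + p - i"] x by (simp add: T_def vs_zero_r[OF vsM])
    qed
  qed
  have B: "sum F S1' = sum T S2'"
  proof (rule sum.reindex_bij_witness[where i="\<lambda>(k,p,i). (i, k+p-i, k-i)" and j="\<lambda>(j,q,r). (r+j, q-r, j)"])
    show "(case case a of (j, q, r) \<Rightarrow> (r + j, q - r, j) of (k, p, i) \<Rightarrow> (i, k + p - i, k - i)) = a"
      if "a \<in> S1'" for a using that by (auto simp: S1'_def)
    show "(case a of (j, q, r) \<Rightarrow> (r + j, q - r, j)) \<in> S2'" if "a \<in> S1'" for a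
      using that K by (auto simp: S1'_def S2'_def)
    show "(case case b of (k, p, i) \<Rightarrow> (i, k + p - i, k - i) of (j, q, r) \<Rightarrow> (r + j, q - r, j)) = b"
      if "b \<in> S2'" for b using that by (auto simp: S2'_def)
    show "(case b of (k, p, i) \<Rightarrow> (i, k + p - i, k - i)) \<in> S1'" if "b \<in> S2'" for b
      using that by (auto simp: S1'_def S2'_def)
    show "T (case a of (j, q, r) \<Rightarrow> (r + j, q - r, j)) = F a" if "a \<in> S1'" for a
    proof -
      obtain j q r where a0: "a = (j, q, r)" by (cases a) auto
      have a: "a = (j, q, r)" "r \<le> q" using that a0 by (auto simp: S1'_def)
      have c: "(of_nat (fact (r + j)) * of_nat (fact (q - r)) * of_nat (q choose (q - r)) :: 'k)
          = of_nat (fact q) * (of_nat (fact (r + j)) / of_nat (fact r))"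
        using a(2) by (simp add: binomial_fact field_simps)
      have "r + j + (q - r) - j = q" using a(2) by simp
      then show ?thesis unfolding a T_def F_def using c by simp
    qed
  qed
  show ?thesis unfolding L R L' R' B ..
qed

end



context setting begin

lemma act_zero_m: "act a 0 = 0"
  by (rule poly_eqI) (simp add: lin_zero[OF act_lin2])

lemma Xt_pure_fun: "Xt (tens a m) = Xp a m" by (rule ext) (rule Xt_pure)

lemma Xt_sum_u: "Xt (sum g S) f = (\<Sum>x\<in>S. Xt (g x) f)" using lin_sum[OF Xt_lin_u] .

lemma core_lhs:
  assumes KJ: "degree (lb a b) \<le> K" and KQ: "\<And>j. j \<le> K \<Longrightarrow> degree (act (coeff (lb a b) j) f) \<le> K"
  shows "Xt (T1p a m b n) f = (\<Sum>j\<le>K. \<Sum>q\<le>K. \<Sum>r\<le>q. sM (of_nat (fact q) * (of_nat (fact (r+j)) / of_nat (fact r)))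
      (mu (mu (m (r+j)) (n (q-r))) (coeff (act (coeff (lb a b) j) f) q)))"
proof -
  have "Xt (T1p a m b n) f = (\<Sum>j\<le>K. Xp (coeff (lb a b) j) (ser_mult mu ((ser_dx sM ^^ j) m) n) f)"
    by (simp add: T1p_N[OF KJ] T1N_def Xt_sum_u Xt_pure)
  also have "\<dots> = (\<Sum>j\<le>K. XN K (coeff (lb a b) j) (ser_mult mu ((ser_dx sM ^^ j) m) n) f)"
    by (rule sum.cong[OF refl]) (rule Xp_N, simp add: KQ)
  also have "\<dots> = (\<Sum>j\<le>K. \<Sum>q\<le>K. \<Sum>r\<le>q. sM (of_nat (fact q) * (of_nat (fact (r+j)) / of_nat (fact r)))
      (mu (mu (m (r+j)) (n (q-r))) (coeff (act (coeff (lb a b) j) f) q)))"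
    by (simp add: XN_def ser_mult_def ser_dxn_apply mu_sum1 mu_scale1 vs_sum_r[OF vsM] vs_mult[OF vsM]
        mult.commute add.commute)
  finally show ?thesis .
qed

lemma jac_act_scaled:
  "coeff (act a (coeff (act b f) p)) k - coeff (act b (coeff (act a f) k)) p =
   (\<Sum>i\<le>k. sM (of_nat ((k + p - i) choose p)) (coeff (act (coeff (lb a b) i) f) (k + p - i)))"
  by (rule jac_act)

lemma core_rhs:
  assumes KA: "\<And>p. degree (act a (coeff (act b f) p)) \<le> K" and KB: "\<And>k. degree (act b (coeff (act a f) k)) \<le> K"
  shows "(\<Sum>p\<le>K. sM (of_nat (fact p)) (mu (n p) (Xp a m (coeff (act b f) p)))) -
         (\<Sum>k\<le>K. sM (of_nat (fact k)) (mu (m k) (Xp b n (coeff (act a f) k)))) =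
    (\<Sum>k\<le>K. \<Sum>p\<le>K. \<Sum>i\<le>k. sM (of_nat (fact k) * of_nat (fact p) * of_nat ((k+p-i) choose p))
        (mu (mu (m k) (n p)) (coeff (act (coeff (lb a b) i) f) (k+p-i))))"
proof -
  have 1: "(\<Sum>p\<le>K. sM (of_nat (fact p)) (mu (n p) (Xp a m (coeff (act b f) p)))) =
     (\<Sum>k\<le>K. \<Sum>p\<le>K. sM (of_nat (fact k) * of_nat (fact p)) (mu (mu (m k) (n p)) (coeff (act a (coeff (act b f) p)) k)))"
  proof -
    have "(\<Sum>p\<le>K. sM (of_nat (fact p)) (mu (n p) (Xp a m (coeff (act b f) p)))) =
       (\<Sum>p\<le>K. \<Sum>k\<le>K. sM (of_nat (fact k) * of_nat (fact p)) (mu (mu (m k) (n p)) (coeff (act a (coeff (act b f) p)) k)))"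
      by (rule sum.cong[OF refl]) (simp add: Xp_N[OF KA] XN_def mu_sum2 mu_scale2 vs_sum_r[OF vsM] vs_mult[OF vsM]
          mult.commute mu_assoc[symmetric] mu_comm[of "n _" "m _"])
    also have "\<dots> = (\<Sum>k\<le>K. \<Sum>p\<le>K. sM (of_nat (fact k) * of_nat (fact p)) (mu (mu (m k) (n p)) (coeff (act a (coeff (act b f) p)) k)))"
      by (rule sum.swap)
    finally show ?thesis .
  qed
  have 2: "(\<Sum>k\<le>K. sM (of_nat (fact k)) (mu (m k) (Xp b n (coeff (act a f) k)))) =
     (\<Sum>k\<le>K. \<Sum>p\<le>K. sM (of_nat (fact k) * of_nat (fact p)) (mu (mu (m k) (n p)) (coeff (act b (coeff (act a f) k)) p)))"
    by (rule sum.cong[OF refl]) (simp add: Xp_N[OF KB] XN_def mu_sum2 mu_scale2 vs_sum_r[OF vsM] vs_mult[OF vsM]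
          mult.commute mu_assoc[symmetric])
  have "(\<Sum>k\<le>K. \<Sum>p\<le>K. sM (of_nat (fact k) * of_nat (fact p)) (mu (mu (m k) (n p)) (coeff (act a (coeff (act b f) p)) k)))
      - (\<Sum>k\<le>K. \<Sum>p\<le>K. sM (of_nat (fact k) * of_nat (fact p)) (mu (mu (m k) (n p)) (coeff (act b (coeff (act a f) k)) p)))
    = (\<Sum>k\<le>K. \<Sum>p\<le>K. sM (of_nat (fact k) * of_nat (fact p)) (mu (mu (m k) (n p))
         (coeff (act a (coeff (act b f) p)) k - coeff (act b (coeff (act a f) k)) p)))"
    by (simp add: sum_subtractf[symmetric] mu_diff2 vs_diff_r[OF vsM])
  also have "\<dots> = (\<Sum>k\<le>K. \<Sum>p\<le>K. \<Sum>i\<le>k. sM (of_nat (fact k) * of_nat (fact p) * of_nat ((k+p-i) choose p))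
        (mu (mu (m k) (n p)) (coeff (act (coeff (lb a b) i) f) (k+p-i))))"
    by (simp add: jac_act_scaled mu_sum2 mu_scale2 vs_sum_r[OF vsM] vs_mult[OF vsM])
  finally show ?thesis using 1 2 by simp
qed

end



context setting begin

lemma deg_le_sum: "(i::nat) \<le> N \<Longrightarrow> (g i :: nat) \<le> (\<Sum>j\<le>N. g j)"
  by (rule member_le_sum) simp_all

lemma Xt_br_pure: "Xt (br (tens a m) (tens b n)) f = Xt (tens a m) (Xt (tens b n) f) - Xt (tens b n) (Xt (tens a m) f)"
proof -
  define J where "J = degree (lb a b)"
  define Q where "Q = (\<Sum>i\<le>J. degree (act (coeff (lb a b) i) f))"
  define P0 where "P0 = degree (act b f)"
  define K0 where "K0 = degree (act a f)"
  define KA where "KA = (\<Sum>p\<le>P0. degree (act a (coeff (act b f) p)))"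
  define KB where "KB = (\<Sum>k\<le>K0. degree (act b (coeff (act a f) k)))"
  define K where "K = J + Q + P0 + K0 + KA + KB"
  have cJ: "coeff (lb a b) i = 0" if "J < i" for i using that by (simp add: J_def coeff_eq_0)
  have degQ: "degree (act (coeff (lb a b) i) f) \<le> Q" for i
  proof (cases "i \<le> J")
    case True then show ?thesis unfolding Q_def by (rule deg_le_sum)
  next
    case False then show ?thesis by (simp add: cJ act_zero_a)
  qed
  have KJ: "degree (lb a b) \<le> K" by (simp add: K_def J_def)
  have KQ: "degree (act (coeff (lb a b) j) f) \<le> K" for j using degQ[of j] by (simp add: K_def)
  have KA': "degree (act a (coeff (act b f) p)) \<le> K" for p
  proof (cases "p \<le> P0")
    case True then have "degree (act a (coeff (act b f) p)) \<le> KA" unfolding KA_def by (rule deg_le_sum)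
    then show ?thesis by (simp add: K_def)
  next
    case False then show ?thesis by (simp add: P0_def coeff_eq_0 act_zero_m)
  qed
  have KB': "degree (act b (coeff (act a f) k)) \<le> K" for k
  proof (cases "k \<le> K0")
    case True then have "degree (act b (coeff (act a f) k)) \<le> KB" unfolding KB_def by (rule deg_le_sum)
    then show ?thesis by (simp add: K_def)
  next
    case False then show ?thesis by (simp add: K0_def coeff_eq_0 act_zero_m)
  qed
  have Ev: "coeff (act (coeff (lb a b) i) f) q = 0" if "J < i \<or> Q < q" for i q
    using that degQ[of i] by (auto simp: cJ act_zero_a coeff_eq_0)
  have QJK: "Q + J \<le> K" unfolding K_def by simp
  have core: "Xt (T1p a m b n) f =
    (\<Sum>p\<le>K. sM (of_nat (fact p)) (mu (n p) (Xp a m (coeff (act b f) p)))) -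
    (\<Sum>k\<le>K. sM (of_nat (fact k)) (mu (m k) (Xp b n (coeff (act a f) k))))"
    unfolding core_lhs[OF KJ KQ] core_rhs[OF KA' KB']
    by (rule reidx[where J=J and Q=Q and E="\<lambda>i q. coeff (act (coeff (lb a b) i) f) q" and w="\<lambda>k p. mu (m k) (n p)", OF Ev])
       (simp_all add: QJK)
  have e1: "Xp a m (Xp b n f) = Xp b (ser_map (Xp a m) n) f +
     (\<Sum>p\<le>K. sM (of_nat (fact p)) (mu (n p) (Xp a m (coeff (act b f) p))))"
    by (rule Xp_comp_expand) (simp add: K_def P0_def)
  have e2: "Xp b n (Xp a m f) = Xp a (ser_map (Xp b n) m) f +
     (\<Sum>k\<le>K. sM (of_nat (fact k)) (mu (m k) (Xp b n (coeff (act a f) k))))"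
    by (rule Xp_comp_expand) (simp add: K_def K0_def)
  have "Xt (br (tens a m) (tens b n)) f = Xt (T1p a m b n) f + Xp b (ser_map (Xp a m) n) f - Xp a (ser_map (Xp b n) m) f"
    by (simp add: br_def T1_pure rho_pure Xt_add_u Xt_diff_u Xt_pure Xt_pure_fun)
  then show ?thesis unfolding Xt_pure_fun e1 e2 core by (simp add: algebra_simps)
qed

lemma Xt_br: "Xt (br u v) f = Xt u (Xt v f) - Xt v (Xt u f)"
proof (rule ext_pure2[where F="\<lambda>u v. Xt (br u v) f" and G="\<lambda>u v. Xt u (Xt v f) - Xt v (Xt u f)"])
  show "Vector_Spaces.linear sT sM (\<lambda>u. Xt (br u v) f)" for v by (rule lin_comp[OF br_lin1 Xt_lin_u])
  show "Vector_Spaces.linear sT sM (\<lambda>v. Xt (br u v) f)" for u by (rule lin_comp[OF br_lin2 Xt_lin_u])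
  show "Vector_Spaces.linear sT sM (\<lambda>u. Xt u (Xt v f) - Xt v (Xt u f))" for v
    by (rule lin_diff_fun[OF Xt_lin_u lin_comp[OF Xt_lin_u Xt_lin_f]])
  show "Vector_Spaces.linear sT sM (\<lambda>v. Xt u (Xt v f) - Xt v (Xt u f))" for u
    by (rule lin_diff_fun[OF lin_comp[OF Xt_lin_u Xt_lin_f] Xt_lin_u])
  show "Xt (br (tens a m) (tens b n)) f = Xt (tens a m) (Xt (tens b n) f) - Xt (tens b n) (Xt (tens a m) f)" for a m b n
    by (rule Xt_br_pure)
qed

lemma rho_br: "rho (br u v) w = rho u (rho v w) - rho v (rho u w)"
  by (rule ext_pure[where F="rho (br u v)" and G="\<lambda>w. rho u (rho v w) - rho v (rho u w)", OF rho_lin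
        lin_diff_fun[OF lin_comp[OF rho_lin rho_lin] lin_comp[OF rho_lin rho_lin]]])
     (simp add: rho_pure ser_map_def Xt_br tens_diff2[symmetric] fun_diff_def)

end



context setting begin

lemma ser_mult_comm: "ser_mult mu f g = ser_mult mu g f"
proof (rule ext)
  fix k
  show "ser_mult mu f g k = ser_mult mu g f k"
    unfolding ser_mult_def
    by (rule sum.reindex_bij_witness[where i="\<lambda>i. k - i" and j="\<lambda>i. k - i"]) (auto simp: mu_comm)
qed

lemma ser_mult_assoc: "ser_mult mu (ser_mult mu f g) h = ser_mult mu f (ser_mult mu g h)"
proof (rule ext)
  fix k
  define A where "A i j = mu (mu (f i) (g j)) (h (k - (i + j)))" for i j
  have "ser_mult mu (ser_mult mu f g) h k = (\<Sum>t\<le>k. \<Sum>i\<le>t. A i (t - i))"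
    unfolding ser_mult_def A_def by (rule sum.cong[OF refl]) (auto simp: mu_sum1 intro!: sum.cong)
  also have "\<dots> = (\<Sum>(i,j)\<in>{(i,j). i+j \<le> k}. A i j)"
    by (rule sum.triangle_reindex_eq[symmetric])
  also have "\<dots> = (\<Sum>(i,j)\<in>Sigma {..k} (\<lambda>i. {..k - i}). A i j)"
    by (rule sum.cong) auto
  also have "\<dots> = (\<Sum>i\<le>k. \<Sum>j\<le>k - i. A i j)"
    by (rule sum.Sigma[symmetric]) auto
  also have "\<dots> = ser_mult mu f (ser_mult mu g h) k"
    unfolding ser_mult_def A_def by (rule sum.cong[OF refl]) (auto simp: mu_sum2 mu_assoc intro!: sum.cong)
  finally show "ser_mult mu (ser_mult mu f g) h k = ser_mult mu f (ser_mult mu g h) k" .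
qed

lemma ser_mult_lcomm: "ser_mult mu f (ser_mult mu g h) = ser_mult mu g (ser_mult mu f h)"
  by (metis ser_mult_assoc ser_mult_comm)

lemma ser_add_apply: "(f + g) k = f k + g k" by simp

lemma ser_scale_add_l: "ser_scale sM (a + b) f = ser_scale sM a f + ser_scale sM b f"
  using vs_add_l[OF vsS] .
lemma ser_scale_zero_l: "ser_scale sM 0 f = 0"
  using vs_zero_l[OF vsS] .

lemma leibniz_n: "(ser_dx sM ^^ l) (ser_mult mu f g) =
   (\<Sum>s\<le>l. ser_scale sM (of_nat (l choose s)) (ser_mult mu ((ser_dx sM ^^ s) f) ((ser_dx sM ^^ (l - s)) g)))"
proof (induct l arbitrary: f g)
  case 0 then show ?case by (simp add: vs_one[OF vsS])
next
  case (Suc l)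
  define X where "X s = ser_mult mu ((ser_dx sM ^^ s) f) ((ser_dx sM ^^ (Suc l - s)) g)" for s
  have "(ser_dx sM ^^ Suc l) (ser_mult mu f g) = (ser_dx sM ^^ l) (ser_mult mu (ser_dx sM f) g + ser_mult mu f (ser_dx sM g))"
    by (simp add: funpow_Suc_right leibniz del: funpow.simps)
  also have "\<dots> = (ser_dx sM ^^ l) (ser_mult mu (ser_dx sM f) g) + (ser_dx sM ^^ l) (ser_mult mu f (ser_dx sM g))"
    by (rule lin_add[OF ser_dxn_lin])
  also have "(ser_dx sM ^^ l) (ser_mult mu (ser_dx sM f) g) = (\<Sum>s\<le>l. ser_scale sM (of_nat (l choose s)) (X (Suc s)))"
    by (simp add: Suc X_def funpow_Suc_right del: funpow.simps)
  also have "(ser_dx sM ^^ l) (ser_mult mu f (ser_dx sM g)) = (\<Sum>s\<le>l. ser_scale sM (of_nat (l choose s)) (X s))"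
    unfolding Suc X_def
    by (rule sum.cong[OF refl]) (simp add: Suc_diff_le funpow_Suc_right del: funpow.simps)
  also have "(\<Sum>s\<le>l. ser_scale sM (of_nat (l choose s)) (X (Suc s))) + (\<Sum>s\<le>l. ser_scale sM (of_nat (l choose s)) (X s))
     = (\<Sum>s\<le>Suc l. ser_scale sM (of_nat (Suc l choose s)) (X s))"
  proof -
    have a: "(\<Sum>s\<le>Suc l. ser_scale sM (of_nat (if s = 0 then 0 else l choose (s - 1))) (X s)) =
        (\<Sum>s\<le>l. ser_scale sM (of_nat (l choose s)) (X (Suc s)))"
      by (subst sum.atMost_Suc_shift) (simp add: ser_scale_zero_l)
    have b: "(\<Sum>s\<le>Suc l. ser_scale sM (of_nat (l choose s)) (X s)) = (\<Sum>s\<le>l. ser_scale sM (of_nat (l choose s)) (X s))"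
      by (simp add: ser_scale_zero_l binomial_eq_0)
    have c: "(\<Sum>s\<le>Suc l. ser_scale sM (of_nat (Suc l choose s)) (X s)) =
      (\<Sum>s\<le>Suc l. ser_scale sM (of_nat (if s = 0 then 0 else l choose (s - 1))) (X s)) +
      (\<Sum>s\<le>Suc l. ser_scale sM (of_nat (l choose s)) (X s))"
      unfolding sum.distrib[symmetric]
    proof (rule sum.cong[OF refl])
      fix s
      have "Suc l choose s = (if s = 0 then 0 else l choose (s - 1)) + (l choose s)"
        by (cases s) auto
      then show "ser_scale sM (of_nat (Suc l choose s)) (X s) =
        ser_scale sM (of_nat (if s = 0 then 0 else l choose (s - 1))) (X s) + ser_scale sM (of_nat (l choose s)) (X s)"
        by (simp only: of_nat_add ser_scale_add_l)
    qed
    show ?thesis unfolding c a b by simp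
  qed
  finally show ?case by (simp add: X_def)
qed

end



context setting begin

lemma reidx2:
  fixes G :: "nat \<Rightarrow> nat \<Rightarrow> 'a" and Y :: "nat \<Rightarrow> nat \<Rightarrow> (nat \<Rightarrow> 'm)"
  assumes Gv: "\<And>k l. J < k \<or> Q < l \<Longrightarrow> G k l = 0" and K: "Q + J \<le> K"
  shows "(\<Sum>i\<le>K. \<Sum>j\<le>K. \<Sum>k\<le>i. sT (of_nat ((i+j-k) choose j)) (tens (G k (i+j-k)) (Y i j)))
   = (\<Sum>k\<le>K. \<Sum>l\<le>K. \<Sum>s\<le>l. sT (of_nat (l choose s)) (tens (G k l) (Y (s+k) (l-s))))"
proof -
  define F where "F = (\<lambda>(i, j, k). sT (of_nat ((i+j-k) choose j)) (tens (G k (i+j-k)) (Y i j)))"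
  define T where "T = (\<lambda>(k, l, s). sT (of_nat (l choose s)) (tens (G k l) (Y (s+k) (l-s))))"
  define S1 where "S1 = {(i,j,k). i\<in>{..K} \<and> j\<in>{..K} \<and> k\<in>{..i}}"
  define S2 where "S2 = {(k,l,s). k\<in>{..K} \<and> l\<in>{..K} \<and> s\<in>{..l}}"
  define S1' where "S1' = {(i,j,k). k \<le> i \<and> k \<le> J \<and> i + j - k \<le> Q}"
  define S2' where "S2' = {(k,l,s). s \<le> l \<and> k \<le> J \<and> l \<le> Q}"
  have fin1: "finite S1" unfolding S1_def
    by (rule finite_subset[of _ "{..K} \<times> {..K} \<times> {..K}"]) auto
  have fin2: "finite S2" unfolding S2_def
    by (rule finite_subset[of _ "{..K} \<times> {..K} \<times> {..K}"]) auto
  have L: "(\<Sum>i\<le>K. \<Sum>j\<le>K. \<Sum>k\<le>i. sT (of_nat ((i+j-k) choose j)) (tens (G k (i+j-k)) (Y i j))) = sum F S1"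
    unfolding F_def S1_def by (subst sum3) (auto simp: case_prod_beta')
  have R: "(\<Sum>k\<le>K. \<Sum>l\<le>K. \<Sum>s\<le>l. sT (of_nat (l choose s)) (tens (G k l) (Y (s+k) (l-s)))) = sum T S2"
    unfolding T_def S2_def by (subst sum3) (auto simp: case_prod_beta')
  have L': "sum F S1 = sum F S1'"
  proof (rule sum.mono_neutral_right[OF fin1])
    show "S1' \<subseteq> S1" using K by (auto simp: S1_def S1'_def)
    show "\<forall>x\<in>S1 - S1'. F x = 0"
    proof
      fix x assume "x \<in> S1 - S1'"
      then obtain i j k where x: "x = (i, j, k)" "\<not> (k \<le> J \<and> i + j - k \<le> Q)" by (auto simp: S1_def S1'_def)
      then have "J < k \<or> Q < i + j - k" by (auto simp: not_le)
      then show "F x = 0" using Gv[of k "i + j - k"] x by (simp add: F_def vs_zero_r[OF vsT])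
    qed
  qed
  have R': "sum T S2 = sum T S2'"
  proof (rule sum.mono_neutral_right[OF fin2])
    show "S2' \<subseteq> S2" using K by (auto simp: S2_def S2'_def)
    show "\<forall>x\<in>S2 - S2'. T x = 0"
    proof
      fix x assume "x \<in> S2 - S2'"
      then obtain k l s where x: "x = (k, l, s)" "\<not> (k \<le> J \<and> l \<le> Q)" by (auto simp: S2_def S2'_def)
      then have "J < k \<or> Q < l" by (auto simp: not_le)
      then show "T x = 0" using Gv[of k l] x by (simp add: T_def vs_zero_r[OF vsT])
    qed
  qed
  have B: "sum F S1' = sum T S2'"
  proof (rule sum.reindex_bij_witness[where i="\<lambda>(k,l,s). (s+k, l-s, k)" and j="\<lambda>(i,j,k). (k, i+j-k, i-k)"])
    show "(case case a of (i, j, k) \<Rightarrow> (k, i + j - k, i - k) of (k, l, s) \<Rightarrow> (s + k, l - s, k)) = a"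
      if "a \<in> S1'" for a using that by (auto simp: S1'_def)
    show "(case a of (i, j, k) \<Rightarrow> (k, i + j - k, i - k)) \<in> S2'" if "a \<in> S1'" for a
      using that by (auto simp: S1'_def S2'_def)
    show "(case case b of (k, l, s) \<Rightarrow> (s + k, l - s, k) of (i, j, k) \<Rightarrow> (k, i + j - k, i - k)) = b"
      if "b \<in> S2'" for b using that by (auto simp: S2'_def)
    show "(case b of (k, l, s) \<Rightarrow> (s + k, l - s, k)) \<in> S1'" if "b \<in> S2'" for b
      using that by (auto simp: S1'_def S2'_def)
    show "T (case a of (i, j, k) \<Rightarrow> (k, i + j - k, i - k)) = F a" if "a \<in> S1'" for a
    proof -
      obtain i j k where a0: "a = (i, j, k)" by (cases a) auto
      have a: "k \<le> i" using that a0 by (auto simp: S1'_def)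
      have e1: "i - k + k = i" "i + j - k - (i - k) = j" "i + j - (k + (i - k)) = j" using a by auto
      have e2: "(i + j - k) choose (i - k) = (i + j - k) choose j"
        using binomial_symmetric[of "i - k" "i + j - k"] a by (simp add: e1)
      show ?thesis unfolding a0 T_def F_def by (simp add: e1 e2)
    qed
  qed
  show ?thesis unfolding L R L' R' B ..
qed

lemma lb_zero1: "lb 0 b = 0" by (rule poly_eqI) (simp add: lin_zero[OF lb_lin1])
lemma lb_zero2: "lb a 0 = 0" by (rule poly_eqI) (simp add: lin_zero[OF lb_lin2])

lemma T1_sum2: "T1 u (sum g S) = (\<Sum>x\<in>S. T1 u (g x))" using lin_sum[OF T1_lin2] .
lemma T1_sum1: "T1 (sum g S) v = (\<Sum>x\<in>S. T1 (g x) v)" using lin_sum[OF T1_lin1] .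

end



context setting begin

lemma T1_jac_pure:
  "T1 (tens a m) (T1 (tens b n) (tens c p)) = T1 (tens b n) (T1 (tens a m) (tens c p)) + T1 (T1 (tens a m) (tens b n)) (tens c p)"
proof -
  define J where "J = degree (lb a b)"
  define Q where "Q = (\<Sum>k\<le>J. degree (lb (coeff (lb a b) k) c))"
  define Jbc where "Jbc = degree (lb b c)"
  define Jac where "Jac = degree (lb a c)"
  define KA where "KA = (\<Sum>j\<le>Jbc. degree (lb a (coeff (lb b c) j)))"
  define KB where "KB = (\<Sum>i\<le>Jac. degree (lb b (coeff (lb a c) i)))"
  define K where "K = J + Q + Jbc + Jac + KA + KB"
  define Y where "Y i j = ser_mult mu ((ser_dx sM ^^ i) m) (ser_mult mu ((ser_dx sM ^^ j) n) p)" for i j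
  define G where "G k l = coeff (lb (coeff (lb a b) k) c) l" for k l
  have cJ: "coeff (lb a b) k = 0" if "J < k" for k using that by (simp add: J_def coeff_eq_0)
  have degQ: "degree (lb (coeff (lb a b) k) c) \<le> Q" for k
  proof (cases "k \<le> J")
    case True then show ?thesis unfolding Q_def by (rule deg_le_sum)
  next
    case False then show ?thesis by (simp add: cJ lb_zero1)
  qed
  have K1: "degree (lb (coeff (lb a b) k) c) \<le> K" for k using degQ[of k] by (simp add: K_def)
  have K2: "degree (lb a (coeff (lb b c) j)) \<le> K" for j
  proof (cases "j \<le> Jbc")
    case True then have "degree (lb a (coeff (lb b c) j)) \<le> KA" unfolding KA_def by (rule deg_le_sum)
    then show ?thesis by (simp add: K_def)
  next
    case False then show ?thesis by (simp add: Jbc_def coeff_eq_0 lb_zero2)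
  qed
  have K3: "degree (lb b (coeff (lb a c) i)) \<le> K" for i
  proof (cases "i \<le> Jac")
    case True then have "degree (lb b (coeff (lb a c) i)) \<le> KB" unfolding KB_def by (rule deg_le_sum)
    then show ?thesis by (simp add: K_def)
  next
    case False then show ?thesis by (simp add: Jac_def coeff_eq_0 lb_zero2)
  qed
  have K4: "degree (lb b c) \<le> K" "degree (lb a c) \<le> K" "degree (lb a b) \<le> K" by (simp_all add: K_def Jbc_def Jac_def J_def)
  have Gv: "G k l = 0" if "J < k \<or> Q < l" for k l
    using that degQ[of k] by (auto simp: G_def cJ lb_zero1 coeff_eq_0)
  have QJK: "Q + J \<le> K" unfolding K_def by simp
  have L1: "T1 (tens a m) (T1 (tens b n) (tens c p)) =
     (\<Sum>i\<le>K. \<Sum>j\<le>K. tens (coeff (lb a (coeff (lb b c) j)) i) (Y i j))"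
  proof -
    have "T1 (tens a m) (T1 (tens b n) (tens c p)) =
        (\<Sum>j\<le>K. \<Sum>i\<le>K. tens (coeff (lb a (coeff (lb b c) j)) i) (Y i j))"
      by (simp add: T1_pure T1p_N[OF K4(1)] T1N_def T1_sum2 T1p_N[OF K2] Y_def)
    also have "\<dots> = (\<Sum>i\<le>K. \<Sum>j\<le>K. tens (coeff (lb a (coeff (lb b c) j)) i) (Y i j))"
      by (rule sum.swap)
    finally show ?thesis .
  qed
  have L2: "T1 (tens b n) (T1 (tens a m) (tens c p)) =
     (\<Sum>i\<le>K. \<Sum>j\<le>K. tens (coeff (lb b (coeff (lb a c) i)) j) (Y i j))"
    by (simp add: T1_pure T1p_N[OF K4(2)] T1N_def T1_sum2 T1p_N[OF K3] Y_def ser_mult_lcomm)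
  have R: "T1 (T1 (tens a m) (tens b n)) (tens c p) =
     (\<Sum>k\<le>K. \<Sum>l\<le>K. \<Sum>s\<le>l. sT (of_nat (l choose s)) (tens (G k l) (Y (s+k) (l-s))))"
  proof -
    have "T1 (T1 (tens a m) (tens b n)) (tens c p) =
       (\<Sum>k\<le>K. \<Sum>l\<le>K. tens (G k l) (ser_mult mu ((ser_dx sM ^^ l) (ser_mult mu ((ser_dx sM ^^ k) m) n)) p))"
      by (simp add: T1_pure T1p_N[OF K4(3)] T1N_def T1_sum1 T1p_N[OF K1] G_def)
    also have "\<dots> = (\<Sum>k\<le>K. \<Sum>l\<le>K. \<Sum>s\<le>l. sT (of_nat (l choose s)) (tens (G k l) (Y (s+k) (l-s))))"
      by (simp add: leibniz_n lin_sum[OF ser_mult_lin1] lin_scale[OF ser_mult_lin1] tens_sum2 tens_scale2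
          Y_def ser_mult_assoc funpow_add)
    finally show ?thesis .
  qed
  have D: "(\<Sum>i\<le>K. \<Sum>j\<le>K. tens (coeff (lb a (coeff (lb b c) j)) i) (Y i j)) -
      (\<Sum>i\<le>K. \<Sum>j\<le>K. tens (coeff (lb b (coeff (lb a c) i)) j) (Y i j)) =
      (\<Sum>i\<le>K. \<Sum>j\<le>K. \<Sum>k\<le>i. sT (of_nat ((i+j-k) choose j)) (tens (G k (i+j-k)) (Y i j)))"
    by (simp add: sum_subtractf[symmetric] tens_diff1[symmetric] jac_lb tens_sum1 tens_scale1 G_def)
  have "T1 (tens a m) (T1 (tens b n) (tens c p)) - T1 (tens b n) (T1 (tens a m) (tens c p)) =
      T1 (T1 (tens a m) (tens b n)) (tens c p)"
    unfolding L1 L2 R D by (rule reidx2[where J=J and Q=Q, OF Gv]) (simp_all add: QJK)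
  then show ?thesis by (simp add: algebra_simps)
qed

lemma T1_jac: "T1 u (T1 v w) = T1 v (T1 u w) + T1 (T1 u v) w"
proof -
  have lin_u: "Vector_Spaces.linear sT sT (\<lambda>u. T1 u (T1 v w))" for v w by (rule T1_lin1)
  have lin_u2: "Vector_Spaces.linear sT sT (\<lambda>u. T1 v (T1 u w) + T1 (T1 u v) w)" for v w
    by (rule lin_add_fun[OF lin_comp[OF T1_lin1 T1_lin2] lin_comp[OF T1_lin1 T1_lin1]])
  have lin_v: "Vector_Spaces.linear sT sT (\<lambda>v. T1 u (T1 v w))" for u w by (rule lin_comp[OF T1_lin1 T1_lin2])
  have lin_v2: "Vector_Spaces.linear sT sT (\<lambda>v. T1 v (T1 u w) + T1 (T1 u v) w)" for u w
    by (rule lin_add_fun[OF T1_lin1 lin_comp[OF T1_lin2 T1_lin1]])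
  have lin_w: "Vector_Spaces.linear sT sT (\<lambda>w. T1 u (T1 v w))" for u v by (rule lin_comp[OF T1_lin2 T1_lin2])
  have lin_w2: "Vector_Spaces.linear sT sT (\<lambda>w. T1 v (T1 u w) + T1 (T1 u v) w)" for u v
    by (rule lin_add_fun[OF lin_comp[OF T1_lin2 T1_lin2] T1_lin2])
  have s1: "T1 (tens a m) (T1 (tens b n) w) = T1 (tens b n) (T1 (tens a m) w) + T1 (T1 (tens a m) (tens b n)) w" for a m b n w
    by (rule ext_pure[OF lin_w lin_w2]) (rule T1_jac_pure)
  have s2: "T1 (tens a m) (T1 v w) = T1 v (T1 (tens a m) w) + T1 (T1 (tens a m) v) w" for a m v w
    by (rule ext_pure[OF lin_v lin_v2]) (rule s1)
  show ?thesis by (rule ext_pure[OF lin_u lin_u2]) (rule s2)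
qed

end



context setting begin

abbreviation "RR \<equiv> range D0op"

lemma RR_zero: "0 \<in> RR" using lin_zero[OF D0op_lin] by (metis rangeI)
lemma RR_add: "x \<in> RR \<Longrightarrow> y \<in> RR \<Longrightarrow> x + y \<in> RR"
proof -
  assume "x \<in> RR" "y \<in> RR"
  then obtain x' y' where "x = D0op x'" "y = D0op y'" by blast
  then have "x + y = D0op (x' + y')" by (simp add: lin_add[OF D0op_lin])
  then show ?thesis by simp
qed
lemma RR_neg: "x \<in> RR \<Longrightarrow> - x \<in> RR"
proof -
  assume "x \<in> RR"
  then obtain x' where "x = D0op x'" by blast
  then have "- x = D0op (- x')" by (simp add: lin_neg[OF D0op_lin])
  then show ?thesis by simp
qed
lemma RR_diff: "x \<in> RR \<Longrightarrow> y \<in> RR \<Longrightarrow> x - y \<in> RR"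
  using RR_add[of x "- y"] RR_neg[of y] by simp
lemma RR_scale: "x \<in> RR \<Longrightarrow> sT c x \<in> RR"
proof -
  assume "x \<in> RR"
  then obtain x' where "x = D0op x'" by blast
  then have "sT c x = D0op (sT c x')" by (simp add: lin_scale[OF D0op_lin])
  then show ?thesis by simp
qed
lemma RR_D0: "D0op x \<in> RR" by simp
lemma RR_sum: "(\<And>x. x \<in> S \<Longrightarrow> f x \<in> RR) \<Longrightarrow> sum f S \<in> RR"
  by (induct S rule: infinite_finite_induct) (auto simp: RR_zero RR_add)

lemma RR_sum_diff: "(\<And>x. x \<in> S \<Longrightarrow> f x - g x \<in> RR) \<Longrightarrow> sum f S - sum g S \<in> RR"
  by (simp add: sum_subtractf[symmetric] RR_sum)

lemma RR_shift: "tens ((dA ^^ r) c) f - tens c (ser_scale sM ((-1) ^ r) ((ser_dx sM ^^ r) f)) \<in> RR"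
proof (induct r arbitrary: f)
  case 0 then show ?case by (simp add: vs_one[OF vsS] RR_zero)
next
  case (Suc r)
  have e: "tens ((dA ^^ Suc r) c) f = D0op (tens ((dA ^^ r) c) f) - tens ((dA ^^ r) c) (ser_dx sM f)"
    by (simp add: D0op_pure)
  have e2: "tens c (ser_scale sM ((-1) ^ Suc r) ((ser_dx sM ^^ Suc r) f)) =
      - tens c (ser_scale sM ((-1) ^ r) ((ser_dx sM ^^ r) (ser_dx sM f)))"
    by (simp add: funpow_Suc_right vs_mult[OF vsS, symmetric] vs_neg_l[OF vsS] tens_neg2 del: funpow.simps)
  have "tens ((dA ^^ Suc r) c) f - tens c (ser_scale sM ((-1) ^ Suc r) ((ser_dx sM ^^ Suc r) f)) =
     D0op (tens ((dA ^^ r) c) f) - (tens ((dA ^^ r) c) (ser_dx sM f) - tens c (ser_scale sM ((-1) ^ r) ((ser_dx sM ^^ r) (ser_dx sM f))))"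
    unfolding e e2 by (simp add: algebra_simps)
  then show ?case using RR_diff[OF RR_D0 Suc[of "ser_dx sM f"]] by simp
qed

end



context setting begin

definition Sj :: "nat \<Rightarrow> (nat \<Rightarrow> 'm) \<Rightarrow> (nat \<Rightarrow> 'm) \<Rightarrow> (nat \<Rightarrow> 'm)" where
  "Sj j n m = (\<Sum>k\<le>j. ser_scale sM ((-1) ^ k * of_nat (j choose k)) ((ser_dx sM ^^ (j - k)) (ser_mult mu ((ser_dx sM ^^ k) n) m)))"

lemma dx_sum: "ser_dx sM (sum g S) = (\<Sum>x\<in>S. ser_dx sM (g x))" using lin_sum[OF ser_dx_lin] .

lemma Sj_eq: "Sj j n m = ser_mult mu n ((ser_dx sM ^^ j) m)"
proof (induct j arbitrary: n)
  case 0 then show ?case by (simp add: Sj_def vs_one[OF vsS])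
next
  case (Suc j)
  define Z where "Z k n = ser_mult mu ((ser_dx sM ^^ k) n) m" for k n
  define c where "c k = ((-1) ^ k * of_nat (j choose k) :: 'k)" for k
  have split: "((-1) ^ k * of_nat (Suc j choose k) :: 'k) = c k + (if k = 0 then 0 else - c (k - 1))" for k
    by (cases k) (auto simp: c_def algebra_simps)
  have "Sj (Suc j) n m = (\<Sum>k\<le>Suc j. ser_scale sM (c k) ((ser_dx sM ^^ (Suc j - k)) (Z k n)))
      + (\<Sum>k\<le>Suc j. ser_scale sM (if k = 0 then 0 else - c (k - 1)) ((ser_dx sM ^^ (Suc j - k)) (Z k n)))"
    unfolding Sj_def split Z_def by (simp add: vs_add_l[OF vsS] sum.distrib)
  also have "(\<Sum>k\<le>Suc j. ser_scale sM (c k) ((ser_dx sM ^^ (Suc j - k)) (Z k n))) = ser_dx sM (Sj j n m)"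
  proof -
    have "(\<Sum>k\<le>Suc j. ser_scale sM (c k) ((ser_dx sM ^^ (Suc j - k)) (Z k n))) =
       (\<Sum>k\<le>j. ser_scale sM (c k) ((ser_dx sM ^^ (Suc j - k)) (Z k n)))"
      by (simp add: c_def vs_zero_l[OF vsS] binomial_eq_0)
    also have "\<dots> = (\<Sum>k\<le>j. ser_dx sM (ser_scale sM (c k) ((ser_dx sM ^^ (j - k)) (Z k n))))"
      by (rule sum.cong[OF refl]) (simp add: Suc_diff_le ser_dx_scale)
    finally show ?thesis by (simp add: Sj_def dx_sum Z_def c_def)
  qed
  also have "(\<Sum>k\<le>Suc j. ser_scale sM (if k = 0 then 0 else - c (k - 1)) ((ser_dx sM ^^ (Suc j - k)) (Z k n))) =
      - Sj j (ser_dx sM n) m"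
  proof -
    have "(\<Sum>k\<le>Suc j. ser_scale sM (if k = 0 then 0 else - c (k - 1)) ((ser_dx sM ^^ (Suc j - k)) (Z k n))) =
       (\<Sum>k\<le>j. ser_scale sM (- c k) ((ser_dx sM ^^ (j - k)) (Z (Suc k) n)))"
      by (subst sum.atMost_Suc_shift) (simp add: vs_zero_l[OF vsS])
    also have "\<dots> = - (\<Sum>k\<le>j. ser_scale sM (c k) ((ser_dx sM ^^ (j - k)) (Z k (ser_dx sM n))))"
      by (simp add: vs_neg_l[OF vsS] sum_negf Z_def funpow_Suc_right del: funpow.simps)
    finally show ?thesis by (simp add: Sj_def Z_def c_def)
  qed
  finally show ?case by (simp add: Suc leibniz)
qed

end



context setting begin

lemma swap_tri:
  assumes "(d::nat) \<le> K"
  shows "(\<Sum>k\<le>K. \<Sum>j\<in>{k..d}. H j k) = (\<Sum>j\<le>d. \<Sum>k\<le>j. H j k)"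
proof -
  have "(\<Sum>k\<le>K. \<Sum>j\<in>{k..d}. H j k) = (\<Sum>(k,j)\<in>Sigma {..K} (\<lambda>k. {k..d}). H j k)"
    by (rule sum.Sigma) auto
  also have "\<dots> = (\<Sum>(j,k)\<in>Sigma {..d} (\<lambda>j. {..j}). H j k)"
    by (rule sum.reindex_bij_witness[where i="\<lambda>(j,k). (k,j)" and j="\<lambda>(k,j). (j,k)"]) (use assms in auto)
  also have "\<dots> = (\<Sum>j\<le>d. \<Sum>k\<le>j. H j k)"
    by (rule sum.Sigma[symmetric]) auto
  finally show ?thesis .
qed

lemma sign_lemma: "k \<le> j \<Longrightarrow> ((-1) ^ j * of_nat (j choose k) * (-1) ^ (j - k) :: 'k) = (-1) ^ k * of_nat (j choose k)"
proof -
  assume kj: "k \<le> j"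
  have "((-1) ^ j :: 'k) = (-1) ^ k * (-1) ^ (j - k)" using kj by (simp add: power_add[symmetric])
  then have "((-1) ^ j * (-1) ^ (j - k) :: 'k) = (-1) ^ k * ((-1) ^ (j - k) * (-1) ^ (j - k))" by simp
  also have "((-1) ^ (j - k) * (-1) ^ (j - k) :: 'k) = 1" by (simp add: power_add[symmetric])
  finally show ?thesis by (simp add: algebra_simps)
qed

lemma T1p_skew: "T1p a m b n + T1p b n a m \<in> RR"
proof -
  define d where "d = degree (lb a b)"
  define K where "K = d + degree (lb b a)"
  define c where "c j = coeff (lb a b) j" for j
  define Z where "Z k = ser_mult mu ((ser_dx sM ^^ k) n) m" for k
  define s where "s j k = ((-1) ^ j * of_nat (j choose k) :: 'k)" for j k
  have dK: "d \<le> K" by (simp add: K_def)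
  have 1: "T1p b n a m = (\<Sum>k\<le>K. - (\<Sum>j\<in>{k..d}. sT (s j k) (tens ((dA ^^ (j - k)) (c j)) (Z k))))"
  proof -
    have "T1p b n a m = T1N K b n a m" by (rule T1p_N) (simp add: K_def)
    then show ?thesis by (simp add: T1N_def skew[where a=a and b=b] tens_neg1 tens_sum1 tens_scale1 Z_def s_def c_def d_def)
  qed
  define V where "V = (\<Sum>k\<le>K. - (\<Sum>j\<in>{k..d}. sT (s j k) (tens (c j) (ser_scale sM ((-1) ^ (j - k)) ((ser_dx sM ^^ (j - k)) (Z k))))))"
  have 2: "T1p b n a m - V \<in> RR"
    unfolding 1 V_def
  proof (rule RR_sum_diff)
    fix k
    show "- (\<Sum>j\<in>{k..d}. sT (s j k) (tens ((dA ^^ (j - k)) (c j)) (Z k))) -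
      - (\<Sum>j\<in>{k..d}. sT (s j k) (tens (c j) (ser_scale sM ((-1) ^ (j - k)) ((ser_dx sM ^^ (j - k)) (Z k))))) \<in> RR"
      using RR_neg[OF RR_sum_diff[of "{k..d}" "\<lambda>j. sT (s j k) (tens ((dA ^^ (j - k)) (c j)) (Z k))"
          "\<lambda>j. sT (s j k) (tens (c j) (ser_scale sM ((-1) ^ (j - k)) ((ser_dx sM ^^ (j - k)) (Z k))))"]]
        RR_scale[OF RR_shift] by (simp add: vs_diff_r[OF vsT, symmetric])
  qed
  have 3: "V = - (\<Sum>j\<le>d. tens (c j) (Sj j n m))"
  proof -
    have "V = - (\<Sum>k\<le>K. \<Sum>j\<in>{k..d}. sT (s j k) (tens (c j) (ser_scale sM ((-1) ^ (j - k)) ((ser_dx sM ^^ (j - k)) (Z k)))))"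
      by (simp add: V_def sum_negf)
    also have "(\<Sum>k\<le>K. \<Sum>j\<in>{k..d}. sT (s j k) (tens (c j) (ser_scale sM ((-1) ^ (j - k)) ((ser_dx sM ^^ (j - k)) (Z k))))) =
      (\<Sum>j\<le>d. \<Sum>k\<le>j. sT (s j k) (tens (c j) (ser_scale sM ((-1) ^ (j - k)) ((ser_dx sM ^^ (j - k)) (Z k)))))"
      by (rule swap_tri[OF dK])
    also have "\<dots> = (\<Sum>j\<le>d. tens (c j) (Sj j n m))"
    proof (rule sum.cong[OF refl])
      fix j
      show "(\<Sum>k\<le>j. sT (s j k) (tens (c j) (ser_scale sM ((-1) ^ (j - k)) ((ser_dx sM ^^ (j - k)) (Z k))))) = tens (c j) (Sj j n m)"
        unfolding Sj_def tens_sum2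
        by (rule sum.cong[OF refl]) (simp add: tens_scale2[symmetric] vs_mult[OF vsS] s_def sign_lemma Z_def)
    qed
    finally show ?thesis .
  qed
  have 4: "(\<Sum>j\<le>d. tens (c j) (Sj j n m)) = T1p a m b n"
    by (simp add: Sj_eq T1p_def d_def c_def ser_mult_comm)
  show ?thesis using 2 unfolding 3 4 by (simp add: algebra_simps)
qed

lemma T1_skew: "T1 u v + T1 v u \<in> RR"
proof -
  have pure: "T1 u (tens b n) + T1 (tens b n) u \<in> RR" for b n
  proof (induct u rule: T_induct)
    case (1 a m) show ?case by (simp add: T1_pure T1p_skew)
  next
    case 2 show ?case by (simp add: lin_zero[OF T1_lin1] lin_zero[OF T1_lin2] RR_zero)
  next
    case (3 x y)
    have "T1 (x + y) (tens b n) + T1 (tens b n) (x + y) = (T1 x (tens b n) + T1 (tens b n) x) + (T1 y (tens b n) + T1 (tens b n) y)"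
      by (simp add: lin_add[OF T1_lin1] lin_add[OF T1_lin2] algebra_simps)
    then show ?case using RR_add[OF 3] by simp
  next
    case (4 c x)
    have "T1 (sT c x) (tens b n) + T1 (tens b n) (sT c x) = sT c (T1 x (tens b n) + T1 (tens b n) x)"
      by (simp add: lin_scale[OF T1_lin1] lin_scale[OF T1_lin2] vs_add_r[OF vsT])
    then show ?case using RR_scale[OF 4] by simp
  qed
  show ?thesis
  proof (induct v rule: T_induct)
    case (1 b n) show ?case by (rule pure)
  next
    case 2 show ?case by (simp add: lin_zero[OF T1_lin1] lin_zero[OF T1_lin2] RR_zero)
  next
    case (3 x y)
    have "T1 u (x + y) + T1 (x + y) u = (T1 u x + T1 x u) + (T1 u y + T1 y u)"
      by (simp add: lin_add[OF T1_lin1] lin_add[OF T1_lin2] algebra_simps)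
    then show ?case using RR_add[OF 3] by simp
  next
    case (4 c x)
    have "T1 u (sT c x) + T1 (sT c x) u = sT c (T1 u x + T1 x u)"
      by (simp add: lin_scale[OF T1_lin1] lin_scale[OF T1_lin2] vs_add_r[OF vsT])
    then show ?case using RR_scale[OF 4] by simp
  qed
qed

end



context setting begin

lemma ser_map_mult_dM: "ser_map dM (ser_mult mu f g) = ser_mult mu (ser_map dM f) g + ser_mult mu f (ser_map dM g)"
  by (simp add: ser_map_def ser_mult_def fun_eq_iff lin_sum[OF dM_lin] dM_mu sum.distrib)

lemma T1p_dA_both: "T1p (dA a) m b n + T1p a m (dA b) n =
    (\<Sum>j\<le>degree (lb a b). tens (dA (coeff (lb a b) j)) (ser_mult mu ((ser_dx sM ^^ j) m) n))"
proof -
  define N where "N = Suc (max (degree (lb a b)) (max (degree (lb (dA a) b)) (degree (lb a (dA b)))))"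
  define X where "X j = ser_mult mu ((ser_dx sM ^^ j) m) n" for j
  define c where "c j = coeff (lb a b) j" for j
  have c0: "c (Suc N) = 0" "c N = 0" by (auto intro!: coeff_eq_0 simp: N_def c_def)
  have s2: "(\<Sum>j\<le>Suc N. tens (if j = 0 then 0 else c (j - 1)) (X j)) = (\<Sum>j\<le>N. tens (c j) (X (Suc j)))"
    by (subst sum.atMost_Suc_shift) simp
  have "T1p (dA a) m b n = T1N (Suc N) (dA a) m b n" by (rule T1p_N) (simp add: N_def)
  also have "\<dots> = (\<Sum>j\<le>N. tens (- c j) (X (Suc j)))"
    unfolding T1N_def by (subst sum.atMost_Suc_shift) (simp add: sesq_lb1 X_def c_def del: funpow.simps)
  also have "\<dots> = - (\<Sum>j\<le>N. tens (c j) (X (Suc j)))"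
    by (simp add: tens_neg1 sum_negf)
  finally have 1: "T1p (dA a) m b n = - (\<Sum>j\<le>N. tens (c j) (X (Suc j)))" .
  have "T1p a m (dA b) n = T1N (Suc N) a m (dA b) n" by (rule T1p_N) (simp add: N_def)
  also have "\<dots> = (\<Sum>j\<le>Suc N. tens (dA (c j)) (X j) + tens (if j = 0 then 0 else c (j - 1)) (X j))"
    unfolding T1N_def by (rule sum.cong[OF refl]) (simp add: sesq_lb2 X_def c_def tens_add1 del: funpow.simps)
  also have "\<dots> = (\<Sum>j\<le>Suc N. tens (dA (c j)) (X j)) + (\<Sum>j\<le>N. tens (c j) (X (Suc j)))"
    by (simp only: sum.distrib s2)
  finally have 2: "T1p a m (dA b) n = (\<Sum>j\<le>Suc N. tens (dA (c j)) (X j)) + (\<Sum>j\<le>N. tens (c j) (X (Suc j)))" .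
  have 3: "(\<Sum>j\<le>Suc N. tens (dA (c j)) (X j)) = (\<Sum>j\<le>degree (lb a b). tens (dA (c j)) (X j))"
    unfolding c_def
    by (rule sum_poly_ext[where g="\<lambda>cc j. tens (dA cc) (X j)"]) (auto simp: lin_zero[OF dA_lin] N_def)
  show ?thesis unfolding 1 2 3 by (simp add: c_def X_def)
qed

lemma T1p_dM_both: "T1p a (ser_map dM m) b n + T1p a m b (ser_map dM n) =
    (\<Sum>j\<le>degree (lb a b). tens (coeff (lb a b) j) (ser_map dM (ser_mult mu ((ser_dx sM ^^ j) m) n)))"
  by (simp add: T1p_def sum.distrib[symmetric] tens_add2[symmetric] ser_map_mult_dM ser_map_dxn[OF dM_lin])

lemma Dop_T1: "Dop (T1 u v) = T1 (Dop u) v + T1 u (Dop v)"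
proof (rule ext_pure2[where F="\<lambda>u v. Dop (T1 u v)" and G="\<lambda>u v. T1 (Dop u) v + T1 u (Dop v)"])
  show "Vector_Spaces.linear sT sT (\<lambda>u. Dop (T1 u v))" for v by (rule lin_comp[OF T1_lin1 Dop_lin])
  show "Vector_Spaces.linear sT sT (\<lambda>v. Dop (T1 u v))" for u by (rule lin_comp[OF T1_lin2 Dop_lin])
  show "Vector_Spaces.linear sT sT (\<lambda>u. T1 (Dop u) v + T1 u (Dop v))" for v
    by (rule lin_add_fun[OF lin_comp[OF Dop_lin T1_lin1] T1_lin1])
  show "Vector_Spaces.linear sT sT (\<lambda>v. T1 (Dop u) v + T1 u (Dop v))" for u
    by (rule lin_add_fun[OF T1_lin2 lin_comp[OF Dop_lin T1_lin2]])
  show "Dop (T1 (tens a m) (tens b n)) = T1 (Dop (tens a m)) (tens b n) + T1 (tens a m) (Dop (tens b n))" for a m b n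
  proof -
    have "T1 (Dop (tens a m)) (tens b n) + T1 (tens a m) (Dop (tens b n)) =
      (T1p (dA a) m b n + T1p a m (dA b) n) + (T1p a (ser_map dM m) b n + T1p a m b (ser_map dM n))"
      by (simp add: Dop_pure lin_add[OF T1_lin1] lin_add[OF T1_lin2] T1_pure algebra_simps)
    also have "\<dots> = Dop (T1p a m b n)"
      unfolding T1p_dA_both T1p_dM_both
      by (simp add: T1p_def lin_sum[OF Dop_lin] Dop_pure sum.distrib)
    finally show ?thesis by (simp add: T1_pure)
  qed
qed

lemma Xp_Dop: "Xp (dA a) m f + Xp a (ser_map dM m) f = dM (Xp a m f) - Xp a m (dM f)"
proof -
  define N where "N = max (degree (act a f)) (max (degree (act (dA a) f)) (degree (act a (dM f))))"
  have e: "Xp (dA a) m f = XN N (dA a) m f" "Xp a (ser_map dM m) f = XN N a (ser_map dM m) f"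
    "Xp a m f = XN N a m f" "Xp a m (dM f) = XN N a m (dM f)"
    by (rule Xp_N, simp add: N_def)+
  have l: "XN N (dA a) m f + XN N a (ser_map dM m) f =
      (\<Sum>p\<le>N. sM (of_nat (fact p)) (mu (m p) (if p = 0 then 0 else - coeff (act a f) (p - 1)) + mu (dM (m p)) (coeff (act a f) p)))"
    by (simp add: XN_def sesq_act1 ser_map_def sum.distrib vs_add_r[OF vsM])
  have r: "dM (XN N a m f) - XN N a m (dM f) =
      (\<Sum>p\<le>N. sM (of_nat (fact p)) ((mu (dM (m p)) (coeff (act a f) p) + mu (m p) (dM (coeff (act a f) p))) - mu (m p) (dM (coeff (act a f) p) + (if p = 0 then 0 else coeff (act a f) (p - 1)))))"
    by (simp add: XN_def sesq_act2 lin_sum[OF dM_lin] lin_scale[OF dM_lin] dM_mu sum_subtractf[symmetric]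
        vs_diff_r[OF vsM])
  have t: "mu (m p) (if p = 0 then 0 else - coeff (act a f) (p - 1)) + mu (dM (m p)) (coeff (act a f) p) =
     (mu (dM (m p)) (coeff (act a f) p) + mu (m p) (dM (coeff (act a f) p))) - mu (m p) (dM (coeff (act a f) p) + (if p = 0 then 0 else coeff (act a f) (p - 1)))" for p
    by (cases p) (simp_all add: mu_add2 mu_neg2)
  show ?thesis unfolding e l r t ..
qed

lemma Xt_Dop: "Xt (Dop u) f = dM (Xt u f) - Xt u (dM f)"
  by (rule ext_pure[where F="\<lambda>u. Xt (Dop u) f" and G="\<lambda>u. dM (Xt u f) - Xt u (dM f)",
        OF lin_comp[OF Dop_lin Xt_lin_u] lin_diff_fun[OF lin_comp[OF Xt_lin_u dM_lin] Xt_lin_u]])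
     (simp add: Dop_pure Xt_add_u Xt_pure Xp_Dop)

lemma ser_map_Dop: "ser_map dM (ser_map (Xt u) n) = ser_map (Xt u) (ser_map dM n) + ser_map (Xt (Dop u)) n"
  by (rule ext) (simp add: ser_map_def Xt_Dop)

lemma Dop_rho: "Dop (rho u v) = rho u (Dop v) + rho (Dop u) v"
proof (rule ext_pure[where F="\<lambda>v. Dop (rho u v)" and G="\<lambda>v. rho u (Dop v) + rho (Dop u) v",
        OF lin_comp[OF rho_lin Dop_lin] lin_add_fun[OF lin_comp[OF Dop_lin rho_lin] rho_lin]])
  fix b n
  have "Dop (rho u (tens b n)) = tens (dA b) (ser_map (Xt u) n) + tens b (ser_map dM (ser_map (Xt u) n))"
    by (simp add: rho_pure Dop_pure)
  also have "\<dots> = tens (dA b) (ser_map (Xt u) n) + tens b (ser_map (Xt u) (ser_map dM n)) + tens b (ser_map (Xt (Dop u)) n)"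
    by (simp only: ser_map_Dop tens_add2 add.assoc)
  also have "\<dots> = rho u (Dop (tens b n)) + rho (Dop u) (tens b n)"
    by (simp add: rho_pure Dop_pure lin_add[OF rho_lin])
  finally show "Dop (rho u (tens b n)) = rho u (Dop (tens b n)) + rho (Dop u) (tens b n)" .
qed

lemma Dop_D0op: "Dop (D0op u) = D0op (Dop u)"
  by (rule ext_pure[OF lin_comp[OF D0op_lin Dop_lin] lin_comp[OF Dop_lin D0op_lin]])
     (simp add: Dop_pure D0op_pure lin_add[OF Dop_lin] lin_add[OF D0op_lin] ser_map_dx[OF dM_lin] algebra_simps)

end



context setting begin

lemma ser_map_zero_fun: "ser_map (\<lambda>f. 0) n = 0" by (simp add: ser_map_def fun_eq_iff)

lemma rho_D0_u: "rho (D0op u) v = 0"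
proof -
  have X: "Xt (D0op u) = (\<lambda>f. 0)" by (rule ext) (rule Xt_D0)
  show ?thesis
    by (rule ext_pure[where F="rho (D0op u)" and G="\<lambda>v. 0", OF rho_lin lin_zero_fun[OF vsT vsT]])
       (simp add: rho_pure X ser_map_zero_fun)
qed

lemma br_D0_left: "br (D0op u) v \<in> RR"
proof -
  have "br (D0op u) v = D0op (- rho v u)"
    by (simp add: br_def T1_D0_left rho_D0_u rho_D0 lin_neg[OF D0op_lin])
  then show ?thesis by simp
qed

lemma br_D0_right: "br u (D0op v) \<in> RR"
proof -
  have "br u (D0op v) = D0op (T1 u v + rho u v)"
    by (simp add: br_def T1_D0_right rho_D0_u rho_D0 lin_add[OF D0op_lin])
  then show ?thesis by simp
qed

lemma half_twice: "sT (1/2) (x + x) = x"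
proof -
  have "x + x = sT 2 x" using vs_add_l[OF vsT, of 1 1 x] by (simp add: vs_one[OF vsT])
  then show ?thesis by (simp add: vs_mult[OF vsT] vs_one[OF vsT])
qed

lemma br_self: "br u u \<in> RR"
proof -
  have "br u u = T1 u u" by (simp add: br_def)
  also have "\<dots> = sT (1/2) (T1 u u + T1 u u)" by (simp add: half_twice)
  finally show ?thesis using RR_scale[OF T1_skew[of u u]] by simp
qed

lemma T1_D0_any: "x \<in> RR \<Longrightarrow> T1 v x \<in> RR"
proof -
  assume "x \<in> RR"
  then obtain z where "x = D0op z" by blast
  then show ?thesis by (simp add: T1_D0_right)
qed

lemma br_jacobi: "br u (br v w) + br v (br w u) + br w (br u v) \<in> RR"
proof -
  have expand: "br u (br v w) = T1 u (T1 v w) + T1 u (rho v w) - T1 u (rho w v) + T1 (rho u v) w + T1 v (rho u w)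
      + rho u (rho v w) - rho u (rho w v) - (rho v (rho w u) - rho w (rho v u))" for u v w
  proof -
    have e0: "br u (br v w) = T1 u (br v w) + rho u (br v w) - (rho v (rho w u) - rho w (rho v u))"
      by (simp only: br_def[of u "br v w"] rho_br)
    have e1: "T1 u (br v w) = T1 u (T1 v w) + T1 u (rho v w) - T1 u (rho w v)"
      by (simp add: br_def lin_add[OF T1_lin2] lin_diff[OF T1_lin2])
    have e2: "rho u (br v w) = T1 (rho u v) w + T1 v (rho u w) + rho u (rho v w) - rho u (rho w v)"
      by (simp add: br_def lin_add[OF rho_lin] lin_diff[OF rho_lin] rho_T1)
    show ?thesis unfolding e0 e1 e2 by (simp add: algebra_simps)
  qed
  define X1 where "X1 = T1 v (T1 u w + T1 w u) + (T1 (T1 u v) w + T1 w (T1 u v))"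
  define X2 where "X2 = (T1 u (rho v w) + T1 (rho v w) u) + (T1 v (rho w u) + T1 (rho w u) v) + (T1 w (rho u v) + T1 (rho u v) w)"
  have "br u (br v w) + br v (br w u) + br w (br u v) = X1 + X2"
    unfolding expand X1_def X2_def T1_jac[of u v w] by (simp add: lin_add[OF T1_lin2] algebra_simps)
  moreover have "X1 \<in> RR" unfolding X1_def by (rule RR_add[OF T1_D0_any[OF T1_skew] T1_skew])
  moreover have "X2 \<in> RR" unfolding X2_def by (rule RR_add[OF RR_add[OF T1_skew T1_skew] T1_skew])
  ultimately show ?thesis by (simp add: RR_add)
qed

lemma Dop_br: "Dop (br u v) = br (Dop u) v + br u (Dop v)"
  by (simp add: br_def lin_add[OF Dop_lin] lin_diff[OF Dop_lin] Dop_T1 Dop_rho algebra_simps)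

lemma main:
  fixes D0 D P :: "'t \<Rightarrow> 't"
  assumes D0_lin: "Vector_Spaces.linear sT sT D0"
    and D0_def: "\<And>a m. D0 (tens a m) = tens (dA a) m + tens a (ser_dx sM m)"
    and D_lin: "Vector_Spaces.linear sT sT D"
    and D_def: "\<And>a m. D (tens a m) = tens (dA a) m + tens a (ser_map dM m)"
    and P_lin: "Vector_Spaces.linear sT sT P"
    and P_def: "\<And>a m. P (tens a m) = tens a (ser_map dM m - ser_dx sM m)"
  shows
    "(\<exists>br. bilinear_map sT br \<and>
        (\<forall>a m b n. br (tens a m) (tens b n) = chain_bracket_pure sM lb act mu tens a m b n)) \<and>
     (\<forall>br. bilinear_map sT br \<and>
        (\<forall>a m b n. br (tens a m) (tens b n) = chain_bracket_pure sM lb act mu tens a m b n)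
      \<longrightarrow>
        (\<forall>u v. br (D0 u) v \<in> range D0 \<and> br u (D0 v) \<in> range D0) \<and>
        (\<forall>u. br u u \<in> range D0) \<and>
        (\<forall>u v w. br u (br v w) + br v (br w u) + br w (br u v) \<in> range D0) \<and>
        (\<forall>u v. D (br u v) = br (D u) v + br u (D v)) \<and>
        (\<forall>u. P (D0 u) \<in> range D0) \<and>
        (\<forall>u v. P (br u v) - (br (P u) v + br u (P v)) \<in> range D0) \<and>
        (\<forall>u v. P u \<in> range D0 \<longrightarrow> P v \<in> range D0 \<longrightarrow> P (br u v) \<in> range D0))"
proof -
  have D0eq: "D0 = D0op"
    by (rule ext, rule ext_pure[OF D0_lin D0op_lin]) (simp add: D0_def D0op_pure)
  have Deq: "D = Dop"
    by (rule ext, rule ext_pure[OF D_lin Dop_lin]) (simp add: D_def Dop_pure)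
  have Peq: "P = (\<lambda>x. Dop x - D0op x)"
    by (rule ext, rule ext_pure[OF P_lin lin_diff_fun[OF Dop_lin D0op_lin]])
       (simp add: P_def Dop_pure D0op_pure tens_diff2)
  have bil: "bilinear_map sT br" unfolding bilinear_map_def using br_lin1 br_lin2 by blast
  have ex: "\<exists>br. bilinear_map sT br \<and>
        (\<forall>a m b n. br (tens a m) (tens b n) = chain_bracket_pure sM lb act mu tens a m b n)"
    using bil br_pure by blast
  have uniq: "br' = br" if "bilinear_map sT br'"
      "\<forall>a m b n. br' (tens a m) (tens b n) = chain_bracket_pure sM lb act mu tens a m b n" for br'
  proof (intro ext)
    fix u v
    show "br' u v = br u v"
      by (rule ext_pure2[where F=br' and G=br]) (use that br_lin1 br_lin2 br_pure in \<open>auto simp: bilinear_map_def\<close>)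
  qed
  have Pderiv: "Dop (br u v) - D0op (br u v) - (br (Dop u - D0op u) v + br u (Dop v - D0op v)) \<in> RR" for u v
  proof -
    have "Dop (br u v) - D0op (br u v) - (br (Dop u - D0op u) v + br u (Dop v - D0op v)) =
       (br (D0op u) v + br u (D0op v)) - D0op (br u v)"
      by (simp add: Dop_br lin_diff[OF br_lin1] lin_diff[OF br_lin2] algebra_simps)
    then show ?thesis using RR_diff[OF RR_add[OF br_D0_left br_D0_right] RR_D0, of u v u v "br u v"] by (simp only:)
  qed
  show ?thesis
  proof (rule conjI[OF ex], intro allI impI)
    fix br' assume h: "bilinear_map sT br' \<and>
        (\<forall>a m b n. br' (tens a m) (tens b n) = chain_bracket_pure sM lb act mu tens a m b n)"
    then have b: "br' = br" using uniq by blast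
    have c1: "\<forall>u v. br' (D0 u) v \<in> range D0 \<and> br' u (D0 v) \<in> range D0"
      unfolding b D0eq using br_D0_left br_D0_right by blast
    have c2: "\<forall>u. br' u u \<in> range D0" unfolding b D0eq using br_self by blast
    have c3: "\<forall>u v w. br' u (br' v w) + br' v (br' w u) + br' w (br' u v) \<in> range D0"
      unfolding b D0eq using br_jacobi by blast
    have c4: "\<forall>u v. D (br' u v) = br' (D u) v + br' u (D v)" unfolding b Deq using Dop_br by blast
    have c5: "\<forall>u. P (D0 u) \<in> range D0"
    proof
      fix u
      have "P (D0 u) = D0op (Dop u - D0op u)"
        by (simp add: Peq D0eq Dop_D0op lin_diff[OF D0op_lin])
      then show "P (D0 u) \<in> range D0" by (simp add: D0eq)
    qed
    have c6: "\<forall>u v. P (br' (u) v) - (br' (P u) v + br' u (P v)) \<in> range D0"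
      unfolding b Peq D0eq using Pderiv by blast
    have c7: "\<forall>u v. P u \<in> range D0 \<longrightarrow> P v \<in> range D0 \<longrightarrow> P (br' u v) \<in> range D0"
    proof (intro allI impI)
      fix u v assume pu: "P u \<in> range D0" and pv: "P v \<in> range D0"
      obtain u' v' where u': "P u = D0op u'" and v': "P v = D0op v'" using pu pv D0eq by auto
      have eq: "P (br u v) = (P (br u v) - (br (P u) v + br u (P v))) + br (P u) v + br u (P v)"
        by (simp add: algebra_simps)
      have m: "P (br u v) - (br (P u) v + br u (P v)) \<in> RR" unfolding Peq by (rule Pderiv)
      have br1: "br (P u) v \<in> RR" using br_D0_left by (simp add: u')
      have br2: "br u (P v) \<in> RR" using br_D0_right by (simp add: v')
      have big: "(P (br u v) - (br (P u) v + br u (P v))) + br (P u) v + br u (P v) \<in> RR"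
        by (rule RR_add[OF RR_add[OF m br1] br2])
      have "P (br u v) \<in> RR" by (subst eq) (rule big)
      then show "P (br' u v) \<in> range D0" by (simp add: b D0eq)
    qed
    show "(\<forall>u v. br' (D0 u) v \<in> range D0 \<and> br' u (D0 v) \<in> range D0) \<and>
        (\<forall>u. br' u u \<in> range D0) \<and>
        (\<forall>u v w. br' u (br' v w) + br' v (br' w u) + br' w (br' u v) \<in> range D0) \<and>
        (\<forall>u v. D (br' u v) = br' (D u) v + br' u (D v)) \<and>
        (\<forall>u. P (D0 u) \<in> range D0) \<and>
        (\<forall>u v. P (br' u v) - (br' (P u) v + br' u (P v)) \<in> range D0) \<and>
        (\<forall>u v. P u \<in> range D0 \<longrightarrow> P v \<in> range D0 \<longrightarrow> P (br' u v) \<in> range D0)"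
      using c1 c2 c3 c4 c5 c6 c7 by blast
  qed
qed

end


theorem lemma3p7:
  fixes sA :: "'k::field_char_0 \<Rightarrow> 'a::ab_group_add \<Rightarrow> 'a"
    and dA :: "'a \<Rightarrow> 'a"
    and lb :: "'a \<Rightarrow> 'a \<Rightarrow> 'a poly"
    and sM :: "'k \<Rightarrow> 'm::ab_group_add \<Rightarrow> 'm"
    and dM :: "'m \<Rightarrow> 'm"
    and act :: "'a \<Rightarrow> 'm \<Rightarrow> 'm poly"
    and mu :: "'m \<Rightarrow> 'm \<Rightarrow> 'm"
    and sT :: "'k \<Rightarrow> 't::ab_group_add \<Rightarrow> 't"
    and tens :: "'a \<Rightarrow> (nat \<Rightarrow> 'm) \<Rightarrow> 't"
    and D0 D P :: "'t \<Rightarrow> 't"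
  assumes LCA: "lie_conformal_algebra sA dA lb"
    and MOD: "lca_module sA dA lb sM dM act"
    and PROD: "derivation_algebra sM dM act mu"
    and TENS: "tensor_product sA (ser_scale sM) sT tens"
    and D0_lin: "Vector_Spaces.linear sT sT D0"
    and D0_def: "\<And>a m. D0 (tens a m) = tens (dA a) m + tens a (ser_dx sM m)"
    and D_lin: "Vector_Spaces.linear sT sT D"
    and D_def: "\<And>a m. D (tens a m) = tens (dA a) m + tens a (ser_map dM m)"
    and P_lin: "Vector_Spaces.linear sT sT P"
    and P_def: "\<And>a m. P (tens a m) = tens a (ser_map dM m - ser_dx sM m)"
  shows
    "(\<exists>br. bilinear_map sT br \<and>
        (\<forall>a m b n. br (tens a m) (tens b n) = chain_bracket_pure sM lb act mu tens a m b n)) \<and>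
     (\<forall>br. bilinear_map sT br \<and>
        (\<forall>a m b n. br (tens a m) (tens b n) = chain_bracket_pure sM lb act mu tens a m b n)
      \<longrightarrow>
        \<comment> \<open>(a) well defined Lie bracket on g = T / range D0\<close>
        (\<forall>u v. br (D0 u) v \<in> range D0 \<and> br u (D0 v) \<in> range D0) \<and>
        (\<forall>u. br u u \<in> range D0) \<and>
        (\<forall>u v w. br u (br v w) + br v (br w u) + br w (br u v) \<in> range D0) \<and>
        \<comment> \<open>(b) d (x) 1 + 1 (x) d^M is a derivation of the bracket on T\<close>
        (\<forall>u v. D (br u v) = br (D u) v + br u (D v)) \<and>
        \<comment> \<open>the induced operator on g is well defined and a derivation of g\<close>
        (\<forall>u. P (D0 u) \<in> range D0) \<and>
        (\<forall>u v. P (br u v) - (br (P u) v + br u (P v)) \<in> range D0) \<and>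
        \<comment> \<open>its kernel g^d is a Lie subalgebra\<close>
        (\<forall>u v. P u \<in> range D0 \<longrightarrow> P v \<in> range D0 \<longrightarrow> P (br u v) \<in> range D0))"
proof -
  interpret S: setting sA dA lb sM dM act mu sT tens
    by (rule setting.intro[OF LCA MOD PROD TENS])
  show ?thesis by (rule S.main[OF D0_lin D0_def D_lin D_def P_lin P_def])
qed

end
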